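(* (a) $\Gamma_s=\{x\in\Gamma_0: P_{G_x}\text{ holds}\}$. (b) If $x\in\Gamma_u$, then $J(x)$ has an eigenvector in $\mathcal{E}_x$ whose eigenvalue has positive real part, where $\mathcal{E}_x=\{\theta\in\mathbb{R}^{|E|}: |\theta|=1\text{ and }\theta\cdot\mathbf{e}_{ij}\neq0\text{ for some }\{i,j\}\in E_x\}$, $E_x=\{\{i,j\}\in E:x_{ij}>0\}$, and $\mathbf{e}_{ij}$ is the standard basis vector of $\mathbb{R}^{|E|}$ for the edge $\{i,j\}$.
   Context: Let $G=(\mathbb{V},E)$ be a finite graph with adjacency $\sim$ and edge set $E$. Let $a_{ij}=a_{ji}\ge0$ ($>0$ only if $i\sim j$) and $p_{ij}=p_{ji}\in[0,1]$ ($=0$ if $i\not\sim j$), with some $a_{ij}p_{ij}>0$. Fix $h_1\in(0,1]$; $\Delta$ is the set of arrays $x=(x_{ij})$ with $x_{ij}=x_{ji}\ge0$, $x_{ij}=0$ if $i\not\sim j$, $\sum_{i,j}x_{ij}=1$, $\sum_{(i,j):a_{ij}p_{ij}>0}x_{ij}\ge h_1$; $x_i=\sum_jx_{ij}$. $\partial\Delta$: the $x\in\Delta$ for which some vertex $i$ having a neighbour $j$ with $a_{ij}p_{ij}>0$ has $\sum_{j:a_{ij}p_{ij}>0}x_{ij}=0$. $H(x)=\sum_{(i,j):x_{ij}>0}a_{ij}p_{ij}x_{ij}^2/(x_ix_j)$; $y_{ij}=a_{ij}p_{ij}x_{ij}/(x_ix_j)$ ($0$ if $a_{ij}p_{ij}=0$);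 $F(x)_{ij}=x_{ij}(y_{ij}-H(x))$ ($0$ if $x_{ij}=0$); $\Gamma=\{x\in\Delta:F(x)=0\}$, $\Gamma_0=\Gamma\cap(\Delta\setminus\partial\Delta)$. For $x\in\Gamma_0$, $J(x)$ is the Jacobian (indexed by pairs of edges) of $(x_e)_{e\in E}\mapsto(F_e(x))_{e\in E}$, with $x_{ij}=x_{ji}=x_e$ for $e=\{i,j\}$, $x_i=\sum_jx_{ij}$, the formulas for $H$ (terms with $a_{ij}p_{ij}>0$) and $F$ regarded as smooth functions of unconstrained variables near $x$. $\Gamma_s$ (resp. $\Gamma_u$) is the set of $x\in\Gamma_0$ such that all eigenvalues of $J(x)$ have nonpositive real part (resp. some eigenvalue has positive real part). $G_x$: subgraph with vertex set $\mathbb{V}$, $i,j$ adjacent iff $x_{ij}>0$. For a subgraph $\mathcal{G}$ of $G$ (vertex set $\mathbb{V}$), $P_{\mathcal{G}}$ means: (1) all edges $\{i,j\}$ of $\mathcal{G}$ in a same connected component have the same value $a_{ij}p_{ij}$, which is $>0$; (2) each connected component contains at most one vertex with several neighbours; (3) a vertex $i$ lies on an edge of $\mathcal{G}$ iff $a_{ij}p_{ij}>0$ for some $j\sim i$. $|\cdot|$ is a norm on $\mathbb{R}^{|E|}$. *)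

theory Defs
  imports "HOL-Analysis.Analysis"
begin

text \<open>Graph: finite vertex set V, symmetric irreflexive adjacency adj (within V).
  Arrays x are functions 'v => 'v => real (x i j = x_ij).  Edges are two-element sets.\<close>

definition edges :: "('v \<Rightarrow> 'v \<Rightarrow> bool) \<Rightarrow> 'v set set" where
  "edges adj = {{i, j} | i j. adj i j}"

text \<open>A chosen ordered pair of endpoints of an edge (all formulas below are symmetric).\<close>
definition epair :: "('v \<Rightarrow> 'v \<Rightarrow> bool) \<Rightarrow> 'v set \<Rightarrow> 'v \<times> 'v" where
  "epair adj e = (SOME ij. adj (fst ij) (snd ij) \<and> e = {fst ij, snd ij})"

definition xv :: "'v set \<Rightarrow> ('v \<Rightarrow> 'v \<Rightarrow> real) \<Rightarrow> 'v \<Rightarrow> real" where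
  "xv V x i = (\<Sum>j\<in>V. x i j)"

definition Delta :: "'v set \<Rightarrow> ('v \<Rightarrow> 'v \<Rightarrow> bool) \<Rightarrow> ('v \<Rightarrow> 'v \<Rightarrow> real) \<Rightarrow>
    ('v \<Rightarrow> 'v \<Rightarrow> real) \<Rightarrow> real \<Rightarrow> ('v \<Rightarrow> 'v \<Rightarrow> real) set" where
  "Delta V adj a p h1 = {x. (\<forall>i j. x i j = x j i) \<and> (\<forall>i j. x i j \<ge> 0)
      \<and> (\<forall>i j. \<not> adj i j \<longrightarrow> x i j = 0)
      \<and> (\<Sum>(i,j)\<in>V \<times> V. x i j) = 1
      \<and> (\<Sum>(i,j)\<in>{(i,j)\<in>V \<times> V. a i j * p i j > 0}. x i j) \<ge> h1}"

definition bdDelta :: "'v set \<Rightarrow> ('v \<Rightarrow> 'v \<Rightarrow> bool) \<Rightarrow> ('v \<Rightarrow> 'v \<Rightarrow> real) \<Rightarrow>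
    ('v \<Rightarrow> 'v \<Rightarrow> real) \<Rightarrow> real \<Rightarrow> ('v \<Rightarrow> 'v \<Rightarrow> real) set" where
  "bdDelta V adj a p h1 = {x \<in> Delta V adj a p h1. \<exists>i\<in>V.
      (\<exists>j. adj i j \<and> a i j * p i j > 0) \<and> (\<Sum>j\<in>{j\<in>V. a i j * p i j > 0}. x i j) = 0}"

definition Hf :: "'v set \<Rightarrow> ('v \<Rightarrow> 'v \<Rightarrow> real) \<Rightarrow> ('v \<Rightarrow> 'v \<Rightarrow> real) \<Rightarrow>
    ('v \<Rightarrow> 'v \<Rightarrow> real) \<Rightarrow> real" where
  "Hf V a p x = (\<Sum>(i,j)\<in>{(i,j)\<in>V \<times> V. x i j > 0}.
      a i j * p i j * (x i j)\<^sup>2 / (xv V x i * xv V x j))"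

definition yf :: "'v set \<Rightarrow> ('v \<Rightarrow> 'v \<Rightarrow> real) \<Rightarrow> ('v \<Rightarrow> 'v \<Rightarrow> real) \<Rightarrow>
    ('v \<Rightarrow> 'v \<Rightarrow> real) \<Rightarrow> 'v \<Rightarrow> 'v \<Rightarrow> real" where
  "yf V a p x i j = (if a i j * p i j = 0 then 0
      else a i j * p i j * x i j / (xv V x i * xv V x j))"

definition Ff :: "'v set \<Rightarrow> ('v \<Rightarrow> 'v \<Rightarrow> real) \<Rightarrow> ('v \<Rightarrow> 'v \<Rightarrow> real) \<Rightarrow>
    ('v \<Rightarrow> 'v \<Rightarrow> real) \<Rightarrow> 'v \<Rightarrow> 'v \<Rightarrow> real" where
  "Ff V a p x i j = (if x i j = 0 then 0 else x i j * (yf V a p x i j - Hf V a p x))"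

definition Gamma :: "'v set \<Rightarrow> ('v \<Rightarrow> 'v \<Rightarrow> bool) \<Rightarrow> ('v \<Rightarrow> 'v \<Rightarrow> real) \<Rightarrow>
    ('v \<Rightarrow> 'v \<Rightarrow> real) \<Rightarrow> real \<Rightarrow> ('v \<Rightarrow> 'v \<Rightarrow> real) set" where
  "Gamma V adj a p h1 = {x \<in> Delta V adj a p h1. \<forall>i j. Ff V a p x i j = 0}"

definition Gamma0 :: "'v set \<Rightarrow> ('v \<Rightarrow> 'v \<Rightarrow> bool) \<Rightarrow> ('v \<Rightarrow> 'v \<Rightarrow> real) \<Rightarrow>
    ('v \<Rightarrow> 'v \<Rightarrow> real) \<Rightarrow> real \<Rightarrow> ('v \<Rightarrow> 'v \<Rightarrow> real) set" where
  "Gamma0 V adj a p h1 = Gamma V adj a p h1 - bdDelta V adj a p h1"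

text \<open>Smooth version of F as a function of unconstrained edge variables
  \<xi> :: 'v set => real (\<xi> e = x_e); x_ij = x_ji = \<xi> {i,j} for adjacent i, j.\<close>

definition arr :: "('v \<Rightarrow> 'v \<Rightarrow> bool) \<Rightarrow> ('v set \<Rightarrow> real) \<Rightarrow> 'v \<Rightarrow> 'v \<Rightarrow> real" where
  "arr adj \<xi> i j = (if adj i j then \<xi> {i, j} else 0)"

definition Hs :: "'v set \<Rightarrow> ('v \<Rightarrow> 'v \<Rightarrow> bool) \<Rightarrow> ('v \<Rightarrow> 'v \<Rightarrow> real) \<Rightarrow>
    ('v \<Rightarrow> 'v \<Rightarrow> real) \<Rightarrow> ('v set \<Rightarrow> real) \<Rightarrow> real" where
  "Hs V adj a p \<xi> = (\<Sum>(i,j)\<in>{(i,j)\<in>V \<times> V. a i j * p i j > 0}.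
      a i j * p i j * (arr adj \<xi> i j)\<^sup>2 / (xv V (arr adj \<xi>) i * xv V (arr adj \<xi>) j))"

definition Fs :: "'v set \<Rightarrow> ('v \<Rightarrow> 'v \<Rightarrow> bool) \<Rightarrow> ('v \<Rightarrow> 'v \<Rightarrow> real) \<Rightarrow>
    ('v \<Rightarrow> 'v \<Rightarrow> real) \<Rightarrow> ('v set \<Rightarrow> real) \<Rightarrow> 'v set \<Rightarrow> real" where
  "Fs V adj a p \<xi> e = (case epair adj e of (i, j) \<Rightarrow>
      arr adj \<xi> i j * (yf V a p (arr adj \<xi>) i j - Hs V adj a p \<xi>))"

definition edgevec :: "('v \<Rightarrow> 'v \<Rightarrow> bool) \<Rightarrow> ('v \<Rightarrow> 'v \<Rightarrow> real) \<Rightarrow> 'v set \<Rightarrow> real" where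
  "edgevec adj x e = (if e \<in> edges adj then case_prod x (epair adj e) else 0)"

definition Jac :: "'v set \<Rightarrow> ('v \<Rightarrow> 'v \<Rightarrow> bool) \<Rightarrow> ('v \<Rightarrow> 'v \<Rightarrow> real) \<Rightarrow>
    ('v \<Rightarrow> 'v \<Rightarrow> real) \<Rightarrow> ('v \<Rightarrow> 'v \<Rightarrow> real) \<Rightarrow> 'v set \<Rightarrow> 'v set \<Rightarrow> real" where
  "Jac V adj a p x e f = deriv (\<lambda>t. Fs V adj a p
      (\<lambda>g. edgevec adj x g + (if g = f then t else 0)) e) 0"

definition is_eigenvalue :: "'e set \<Rightarrow> ('e \<Rightarrow> 'e \<Rightarrow> real) \<Rightarrow> complex \<Rightarrow> bool" where
  "is_eigenvalue E M mu = (\<exists>v :: 'e \<Rightarrow> complex. (\<exists>e\<in>E. v e \<noteq> 0) \<and>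
      (\<forall>e\<in>E. (\<Sum>f\<in>E. complex_of_real (M e f) * v f) = mu * v e))"

definition Gamma_s :: "'v set \<Rightarrow> ('v \<Rightarrow> 'v \<Rightarrow> bool) \<Rightarrow> ('v \<Rightarrow> 'v \<Rightarrow> real) \<Rightarrow>
    ('v \<Rightarrow> 'v \<Rightarrow> real) \<Rightarrow> real \<Rightarrow> ('v \<Rightarrow> 'v \<Rightarrow> real) set" where
  "Gamma_s V adj a p h1 = {x \<in> Gamma0 V adj a p h1.
      \<forall>mu. is_eigenvalue (edges adj) (Jac V adj a p x) mu \<longrightarrow> Re mu \<le> 0}"

definition Gamma_u :: "'v set \<Rightarrow> ('v \<Rightarrow> 'v \<Rightarrow> bool) \<Rightarrow> ('v \<Rightarrow> 'v \<Rightarrow> real) \<Rightarrow>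
    ('v \<Rightarrow> 'v \<Rightarrow> real) \<Rightarrow> real \<Rightarrow> ('v \<Rightarrow> 'v \<Rightarrow> real) set" where
  "Gamma_u V adj a p h1 = {x \<in> Gamma0 V adj a p h1.
      \<exists>mu. is_eigenvalue (edges adj) (Jac V adj a p x) mu \<and> Re mu > 0}"

definition P_graph :: "'v set \<Rightarrow> ('v \<Rightarrow> 'v \<Rightarrow> bool) \<Rightarrow> ('v \<Rightarrow> 'v \<Rightarrow> real) \<Rightarrow>
    ('v \<Rightarrow> 'v \<Rightarrow> real) \<Rightarrow> ('v \<Rightarrow> 'v \<Rightarrow> bool) \<Rightarrow> bool" where
  "P_graph V adj a p R =
     ((\<forall>i j k l. R i j \<and> R k l \<and> R\<^sup>*\<^sup>* i k \<longrightarrow>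
          a i j * p i j = a k l * p k l \<and> a i j * p i j > 0)
    \<and> (\<forall>u v. R\<^sup>*\<^sup>* u v \<and> (\<exists>j k. j \<noteq> k \<and> R u j \<and> R u k)
          \<and> (\<exists>j k. j \<noteq> k \<and> R v j \<and> R v k) \<longrightarrow> u = v)
    \<and> (\<forall>i\<in>V. (\<exists>j. R i j) \<longleftrightarrow> (\<exists>j. adj i j \<and> a i j * p i j > 0)))"

definition is_norm_on :: "'e set \<Rightarrow> (('e \<Rightarrow> real) \<Rightarrow> real) \<Rightarrow> bool" where
  "is_norm_on E N = (\<forall>\<theta> \<eta> c. (\<forall>e. e \<notin> E \<longrightarrow> \<theta> e = 0) \<longrightarrow> (\<forall>e. e \<notin> E \<longrightarrow> \<eta> e = 0) \<longrightarrow>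
      (N \<theta> = 0 \<longleftrightarrow> \<theta> = (\<lambda>_. 0)) \<and> N (\<lambda>e. c * \<theta> e) = \<bar>c\<bar> * N \<theta>
      \<and> N (\<lambda>e. \<theta> e + \<eta> e) \<le> N \<theta> + N \<eta>)"

end

theory Submission
  imports Defs
begin



locale eqs =
  fixes V :: "'v set" and adj :: "'v \<Rightarrow> 'v \<Rightarrow> bool" and a p :: "'v \<Rightarrow> 'v \<Rightarrow> real" and h1 :: real
    and x :: "'v \<Rightarrow> 'v \<Rightarrow> real"
  assumes finV: "finite V"
    and adjV: "\<And>i j. adj i j \<Longrightarrow> i \<in> V \<and> j \<in> V"
    and adj_sym: "\<And>i j. adj i j = adj j i"
    and irr: "\<And>i. \<not> adj i i"
    and a_ax: "\<And>i j. a i j = a j i \<and> a i j \<ge> 0 \<and> (a i j > 0 \<longrightarrow> adj i j)"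
    and p_ax: "\<And>i j. p i j = p j i \<and> 0 \<le> p i j \<and> p i j \<le> 1 \<and> (\<not> adj i j \<longrightarrow> p i j = 0)"
    and h1pos: "0 < h1"
    and xG: "x \<in> Gamma0 V adj a p h1"
begin

abbreviation "ap i j \<equiv> a i j * p i j"
abbreviation "X \<equiv> xv V x"
abbreviation "HH \<equiv> Hf V a p x"
abbreviation "EE \<equiv> edges adj"
definition "xe e = case_prod x (epair adj e)"
definition "Ep = {e \<in> EE. xe e > 0}"

lemma xD: "(\<forall>i j. x i j = x j i) \<and> (\<forall>i j. x i j \<ge> 0)
      \<and> (\<forall>i j. \<not> adj i j \<longrightarrow> x i j = 0)
      \<and> (\<Sum>(i,j)\<in>V \<times> V. x i j) = 1
      \<and> (\<Sum>(i,j)\<in>{(i,j)\<in>V \<times> V. ap i j > 0}. x i j) \<ge> h1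
      \<and> (\<forall>i j. Ff V a p x i j = 0) \<and> x \<notin> bdDelta V adj a p h1"
  using xG unfolding Gamma0_def Gamma_def Delta_def by auto

lemma x_sym: "x i j = x j i" using xD by auto
lemma x_nn: "0 \<le> x i j" using xD by auto
lemma x_nadj: "\<not> adj i j \<Longrightarrow> x i j = 0" using xD by auto
lemma F0: "Ff V a p x i j = 0" using xD by auto
lemma notbd: "x \<notin> bdDelta V adj a p h1" using xD by auto

lemma ap_sym: "ap i j = ap j i" using a_ax p_ax by metis
lemma ap_nn: "0 \<le> ap i j" using a_ax p_ax by simp
lemma ap_adj: "ap i j \<noteq> 0 \<Longrightarrow> adj i j" using p_ax by fastforce

lemma finE: "finite EE"
proof -
  have "EE \<subseteq> Pow V" unfolding edges_def by (auto dest: adjV)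
  moreover have "finite (Pow V)" using finV by simp
  ultimately show ?thesis by (rule finite_subset)
qed

lemma X_ge: "j \<in> V \<Longrightarrow> x i j \<le> X i"
  unfolding xv_def using finV x_nn by (intro member_le_sum) auto
lemma X_nn: "0 \<le> X i" unfolding xv_def using x_nn by (simp add: sum_nonneg)

lemma R_adj: "0 < x i j \<Longrightarrow> adj i j" using x_nadj by force

lemma X_posR: "0 < x i j \<Longrightarrow> 0 < X i"
  using X_ge[of j i] R_adj adjV by fastforce

lemma apX: assumes "ap i j > 0" shows "0 < X i"
proof -
  have adj: "adj i j" using assms by (intro ap_adj) linarith
  then have iV: "i \<in> V" using adjV by blast
  have xDel: "x \<in> Delta V adj a p h1" using xG unfolding Gamma0_def Gamma_def by simp
  have nb: "\<not> (\<exists>i\<in>V. (\<exists>j. adj i j \<and> ap i j > 0) \<and> (\<Sum>j\<in>{j\<in>V. ap i j > 0}. x i j) = 0)"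
    using notbd xDel unfolding bdDelta_def by simp
  have "(\<Sum>j\<in>{j\<in>V. ap i j > 0}. x i j) \<noteq> 0"
    using nb iV adj assms by blast
  then have "\<exists>k\<in>{j\<in>V. ap i j > 0}. x i k \<noteq> 0"
    using sum.neutral[of "{j\<in>V. ap i j > 0}" "\<lambda>j. x i j"] by blast
  then obtain k where "k \<in> V" "x i k \<noteq> 0" by blast
  then show ?thesis using x_nn X_posR by (metis order_less_le)
qed

lemma H_pos: "0 < HH"
proof -
  define S where "S = {(i,j)\<in>V \<times> V. ap i j > 0}"
  have "0 < (\<Sum>(i,j)\<in>S. x i j)" using xD h1pos unfolding S_def by linarith
  then obtain ij where ij0: "ij \<in> S" "0 < (case ij of (i,j) \<Rightarrow> x i j)" by (meson not_le sum_nonpos)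
  then obtain i j where ij: "i \<in> V" "j \<in> V" "ap i j > 0" "x i j > 0" unfolding S_def by auto
  have fin: "finite {(i,j)\<in>V \<times> V. x i j > 0}" using finV by (auto intro: finite_subset)
  have Xi: "X i > 0" "X j > 0" using X_posR[of i j] X_posR[of j i] ij x_sym by auto
  have nn: "\<And>k l. 0 \<le> ap k l * (x k l)^2 / (X k * X l)"
    by (intro divide_nonneg_nonneg mult_nonneg_nonneg ap_nn X_nn) auto
  have pos: "0 < ap i j * (x i j)^2/(X i * X j)" using ij Xi by simp
  show ?thesis unfolding Hf_def
    apply (rule sum_pos2[OF fin, of "(i,j)"])
    subgoal using ij by simp
    subgoal using pos by simp
    subgoal for ij using nn by (cases ij) simp
    done
qed

lemma eqR: assumes "0 < x i j" shows "0 < ap i j" "ap i j * x i j / (X i * X j) = HH"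
proof -
  have "yf V a p x i j = HH" using F0[of i j] assms unfolding Ff_def by auto
  then have *: "(if ap i j = 0 then 0 else ap i j * x i j / (X i * X j)) = HH"
    unfolding yf_def by simp
  then show "0 < ap i j" using H_pos ap_nn by (smt (verit))
  from * this show "ap i j * x i j / (X i * X j) = HH" by (auto split: if_splits)
qed

lemma epair_ex: "e \<in> EE \<Longrightarrow> adj (fst (epair adj e)) (snd (epair adj e)) \<and> e = {fst (epair adj e), snd (epair adj e)}"
  unfolding epair_def edges_def by (rule someI_ex) auto

lemma epairD: assumes "e \<in> EE" "epair adj e = (i,j)"
  shows "adj i j" "e = {i,j}" "i \<noteq> j" "i \<in> V" "j \<in> V"
  using epair_ex[OF assms(1)] assms(2) irr adjV by auto

lemma edge_iff: "{i,j} \<in> EE \<longleftrightarrow> adj i j"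
  unfolding edges_def by (auto simp: doubleton_eq_iff adj_sym)

lemma xe_pair: assumes "adj i j" shows "xe {i,j} = x i j"
proof -
  obtain k l where kl: "epair adj {i,j} = (k,l)" by fastforce
  have "{i,j} = {k,l}" using epairD[OF _ kl] edge_iff assms by auto
  then show ?thesis unfolding xe_def kl by (auto simp: doubleton_eq_iff x_sym)
qed

lemma xe_epair: "epair adj e = (i,j) \<Longrightarrow> xe e = x i j" unfolding xe_def by simp

lemma arr_pert: assumes "f \<in> EE"
  shows "arr adj (\<lambda>g. edgevec adj x g + (if g = f then t else 0)) k l = x k l + (if {k,l} = f then t else 0)"
proof (cases "adj k l")
  case True
  then show ?thesis unfolding arr_def edgevec_def using edge_iff xe_pair[OF True]
    by (simp add: xe_def)
next
  case False
  then have "{k,l} \<noteq> f" using edge_iff assms by auto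
  then show ?thesis unfolding arr_def using False x_nadj by simp
qed

lemma xv_pert: assumes "f \<in> EE"
  shows "xv V (arr adj (\<lambda>g. edgevec adj x g + (if g = f then t else 0))) k = X k + (if k \<in> f then t else 0)"
proof -
  have "xv V (arr adj (\<lambda>g. edgevec adj x g + (if g = f then t else 0))) k
      = X k + (\<Sum>l\<in>V. (if {k,l} = f then t else 0))"
    unfolding xv_def arr_pert[OF assms] by (simp add: sum.distrib)
  also have "(\<Sum>l\<in>V. (if {k,l} = f then t else 0)) = (if k \<in> f then t else 0)"
  proof (cases "k \<in> f")
    case True
    obtain u w where uw: "epair adj f = (u,w)" by fastforce
    note D = epairD[OF assms uw]
    obtain m where m: "f = {k,m}" "m \<in> V" "m \<noteq> k" using True D by auto
    have "\<And>l. ({k,l} = f) = (l = m)" using m by (auto simp: doubleton_eq_iff)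
    then show ?thesis using True m finV by simp
  next
    case False
    then have "\<And>l. {k,l} \<noteq> f" by blast
    then show ?thesis using False by simp
  qed
  finally show ?thesis .
qed

end



lemma quot_deriv: fixes c \<alpha> \<beta> \<gamma> \<delta> \<epsilon> \<zeta> :: real
  assumes "\<gamma>*\<epsilon> \<noteq> 0"
  shows "((\<lambda>t::real. c*(\<alpha>+t*\<beta>)^2/((\<gamma>+t*\<delta>)*(\<epsilon>+t*\<zeta>))) has_real_derivative
   c*(2*\<alpha>*\<beta>*(\<gamma>*\<epsilon>) - \<alpha>^2*(\<delta>*\<epsilon>+\<gamma>*\<zeta>))/(\<gamma>*\<epsilon>)^2) (at 0)"
proof -
  have n: "((\<lambda>t::real. c*(\<alpha>+t*\<beta>)^2) has_real_derivative c*(2*\<alpha>*\<beta>)) (at 0)"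
    by (auto intro!: derivative_eq_intros)
  have d: "((\<lambda>t::real. (\<gamma>+t*\<delta>)*(\<epsilon>+t*\<zeta>)) has_real_derivative (\<delta>*\<epsilon>+\<gamma>*\<zeta>)) (at 0)"
    by (auto intro!: derivative_eq_intros)
  have "((\<lambda>t::real. c*(\<alpha>+t*\<beta>)^2/((\<gamma>+t*\<delta>)*(\<epsilon>+t*\<zeta>))) has_real_derivative
     (c*(2*\<alpha>*\<beta>) * ((\<gamma>+0*\<delta>)*(\<epsilon>+0*\<zeta>)) - c*(\<alpha>+0*\<beta>)^2 * (\<delta>*\<epsilon>+\<gamma>*\<zeta>)) / (((\<gamma>+0*\<delta>)*(\<epsilon>+0*\<zeta>)) * ((\<gamma>+0*\<delta>)*(\<epsilon>+0*\<zeta>)))) (at 0)"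
    using DERIV_divide[OF n d] assms by simp
  then show ?thesis by (simp add: power2_eq_square algebra_simps)
qed

lemma quot_deriv1: fixes c \<alpha> \<beta> \<gamma> \<delta> \<epsilon> \<zeta> :: real
  assumes "\<gamma>*\<epsilon> \<noteq> 0"
  shows "((\<lambda>t::real. c*(\<alpha>+t*\<beta>)/((\<gamma>+t*\<delta>)*(\<epsilon>+t*\<zeta>))) has_real_derivative
   c*(\<beta>*(\<gamma>*\<epsilon>) - \<alpha>*(\<delta>*\<epsilon>+\<gamma>*\<zeta>))/(\<gamma>*\<epsilon>)^2) (at 0)"
proof -
  have n: "((\<lambda>t::real. c*(\<alpha>+t*\<beta>)) has_real_derivative c*\<beta>) (at 0)"
    by (auto intro!: derivative_eq_intros)
  have d: "((\<lambda>t::real. (\<gamma>+t*\<delta>)*(\<epsilon>+t*\<zeta>)) has_real_derivative (\<delta>*\<epsilon>+\<gamma>*\<zeta>)) (at 0)"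
    by (auto intro!: derivative_eq_intros)
  have "((\<lambda>t::real. c*(\<alpha>+t*\<beta>)/((\<gamma>+t*\<delta>)*(\<epsilon>+t*\<zeta>))) has_real_derivative
     (c*\<beta> * ((\<gamma>+0*\<delta>)*(\<epsilon>+0*\<zeta>)) - c*(\<alpha>+0*\<beta>) * (\<delta>*\<epsilon>+\<gamma>*\<zeta>)) / (((\<gamma>+0*\<delta>)*(\<epsilon>+0*\<zeta>)) * ((\<gamma>+0*\<delta>)*(\<epsilon>+0*\<zeta>)))) (at 0)"
    using DERIV_divide[OF n d] assms by simp
  then show ?thesis by (simp add: power2_eq_square algebra_simps)
qed

context eqs begin

definition "pert f t = (\<lambda>g. edgevec adj x g + (if g = f then t else 0))"
definition "dd f k l = (if {k,l} = f then (1::real) else 0)"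
definition "dv f k = (if k \<in> f then (1::real) else 0)"
definition "PP = {(k,l)\<in>V \<times> V. ap k l > 0}"
definition "HD f = (\<Sum>(k,l)\<in>PP. ap k l*(2*x k l*dd f k l*(X k*X l) - (x k l)^2*(dv f k*X l + X k*dv f l))/(X k*X l)^2)"

lemma x_zero: "\<not> 0 < x i j \<Longrightarrow> x i j = 0" using x_nn[of i j] by simp

lemma finPP: "finite PP" unfolding PP_def using finV by (auto intro: finite_subset)

lemma arr_pert': "f \<in> EE \<Longrightarrow> arr adj (pert f t) k l = x k l + t * dd f k l"
  unfolding pert_def dd_def using arr_pert by simp

lemma xv_pert': "f \<in> EE \<Longrightarrow> xv V (arr adj (pert f t)) k = X k + t * dv f k"
  unfolding pert_def dv_def using xv_pert by simp

lemma Hs_pert: "f \<in> EE \<Longrightarrow> Hs V adj a p (pert f t) =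
   (\<Sum>(k,l)\<in>PP. ap k l*(x k l + t*dd f k l)^2/((X k + t*dv f k)*(X l + t*dv f l)))"
  unfolding Hs_def PP_def by (simp add: arr_pert' xv_pert')

lemma PP_X: "(k,l) \<in> PP \<Longrightarrow> X k * X l \<noteq> 0"
  unfolding PP_def using apX[of k l] apX[of l k] ap_sym[of k l] by auto

lemma Hs_deriv: assumes "f \<in> EE"
  shows "((\<lambda>t. Hs V adj a p (pert f t)) has_real_derivative HD f) (at 0)"
proof -
  have "((\<lambda>t. \<Sum>kl\<in>PP. (case kl of (k,l) \<Rightarrow> ap k l*(x k l + t*dd f k l)^2/((X k + t*dv f k)*(X l + t*dv f l))))
     has_real_derivative (\<Sum>kl\<in>PP. (case kl of (k,l) \<Rightarrow> ap k l*(2*x k l*dd f k l*(X k*X l) - (x k l)^2*(dv f k*X l + X k*dv f l))/(X k*X l)^2))) (at 0)"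
  proof (rule DERIV_sum)
    fix kl assume "kl \<in> PP"
    then obtain k l where kl: "kl = (k,l)" "(k,l) \<in> PP" by (cases kl) auto
    show "((\<lambda>t. case kl of (k,l) \<Rightarrow> ap k l*(x k l + t*dd f k l)^2/((X k + t*dv f k)*(X l + t*dv f l)))
       has_real_derivative (case kl of (k,l) \<Rightarrow> ap k l*(2*x k l*dd f k l*(X k*X l) - (x k l)^2*(dv f k*X l + X k*dv f l))/(X k*X l)^2)) (at 0)"
      unfolding kl(1) using quot_deriv[OF PP_X[OF kl(2)]] by simp
  qed
  then show ?thesis unfolding HD_def Hs_pert[OF assms] by (simp add: case_prod_beta')
qed

lemma Hs0: assumes "f \<in> EE" shows "Hs V adj a p (pert f 0) = HH"
proof -
  have "Hs V adj a p (pert f 0) = (\<Sum>(k,l)\<in>PP. ap k l*(x k l)^2/(X k * X l))"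
    using Hs_pert[OF assms, of 0] by simp
  also have "\<dots> = (\<Sum>(k,l)\<in>{(k,l)\<in>V \<times> V. x k l > 0}. ap k l*(x k l)^2/(X k * X l))"
  proof (rule sum.mono_neutral_right[OF finPP])
    show "{(k,l)\<in>V \<times> V. x k l > 0} \<subseteq> PP" unfolding PP_def using eqR by auto
    show "\<forall>i\<in>PP - {(k,l)\<in>V \<times> V. x k l > 0}. (case i of (k,l) \<Rightarrow> ap k l*(x k l)^2/(X k * X l)) = 0"
      unfolding PP_def by (auto simp: x_nn less_le)
  qed
  finally show ?thesis unfolding Hf_def .
qed

definition "YD i j f = (if ap i j = 0 then 0 else ap i j*(dd f i j*(X i*X j) - x i j*(dv f i*X j + X i*dv f j))/(X i*X j)^2)"

lemma Fs_pert: assumes "e \<in> EE" "epair adj e = (i,j)" "f \<in> EE"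
  shows "Fs V adj a p (pert f t) e = (x i j + t*dd f i j) * ((if ap i j = 0 then 0 else ap i j*(x i j + t*dd f i j)/((X i + t*dv f i)*(X j + t*dv f j))) - Hs V adj a p (pert f t))"
  unfolding Fs_def yf_def assms(2) using assms(3) by (simp add: arr_pert' xv_pert')

lemma Jac_formula: assumes e: "e \<in> EE" "epair adj e = (i,j)" and f: "f \<in> EE"
  shows "Jac V adj a p x e f = dd f i j*(yf V a p x i j - HH) + x i j*(YD i j f - HD f)"
proof -
  define yfp where "yfp t = (if ap i j = 0 then 0 else ap i j*(x i j + t*dd f i j)/((X i + t*dv f i)*(X j + t*dv f j)))" for t
  have yd: "(yfp has_real_derivative YD i j f) (at 0)"
  proof (cases "ap i j = 0")
    case True
    then show ?thesis unfolding yfp_def YD_def by simp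
  next
    case False
    have "ap i j > 0" using False ap_nn[of i j] by linarith
    then have "X i * X j \<noteq> 0" using apX[of i j] apX[of j i] ap_sym[of i j] by auto
    from quot_deriv1[OF this, of "ap i j" "x i j" "dd f i j" "dv f i" "dv f j"]
    show ?thesis unfolding yfp_def YD_def using False by simp
  qed
  have D: "((\<lambda>t. (x i j + t*dd f i j) * (yfp t - Hs V adj a p (pert f t))) has_real_derivative
     dd f i j * (yfp 0 - Hs V adj a p (pert f 0)) + (YD i j f - HD f) * (x i j + 0*dd f i j)) (at 0)"
    by (rule DERIV_mult[OF _ DERIV_diff[OF yd Hs_deriv[OF f]]]) (auto intro!: derivative_eq_intros)
  have eqf: "(\<lambda>t. Fs V adj a p (\<lambda>g. edgevec adj x g + (if g = f then t else 0)) e)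
      = (\<lambda>t. (x i j + t*dd f i j) * (yfp t - Hs V adj a p (pert f t)))"
    using Fs_pert[OF e f] unfolding yfp_def pert_def by simp
  have y0: "yfp 0 = yf V a p x i j" unfolding yfp_def yf_def by simp
  show ?thesis unfolding Jac_def eqf using DERIV_imp_deriv[OF D] y0 Hs0[OF f] by (simp add: algebra_simps)
qed

lemma dd_e: assumes "e \<in> EE" "epair adj e = (i,j)" shows "dd f i j = (if e = f then 1 else 0)"
  using epairD[OF assms] unfolding dd_def by auto

lemma Jac_zero: assumes e: "e \<in> EE" and f: "f \<in> EE" and z: "xe e = 0"
  shows "Jac V adj a p x e f = (if f = e then - HH else 0)"
proof -
  obtain i j where ij: "epair adj e = (i,j)" by fastforce
  have x0: "x i j = 0" using z xe_epair[OF ij] by simp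
  have "yf V a p x i j = 0" unfolding yf_def x0 by simp
  then show ?thesis using Jac_formula[OF e ij f] dd_e[OF e ij, of f] x0 by auto
qed

lemma sum_dd: assumes "f \<in> EE" shows "(\<Sum>l\<in>V. dd f k l) = dv f k"
  using xv_pert'[OF assms, of 1 k] unfolding xv_def arr_pert'[OF assms] by (simp add: sum.distrib)

lemma sum_dv: assumes "f \<in> EE" shows "(\<Sum>k\<in>V. dv f k) = 2"
proof -
  obtain u w where uw: "epair adj f = (u,w)" by fastforce
  note D = epairD[OF assms uw]
  have "(\<Sum>k\<in>V. dv f k) = (\<Sum>k\<in>f. dv f k)"
    by (rule sum.mono_neutral_right[OF finV]) (use D in \<open>auto simp: dv_def\<close>)
  also have "\<dots> = 2" using D by (simp add: dv_def)
  finally show ?thesis .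
qed

lemma sum_dvX: assumes "f \<in> EE" "xe f > 0" shows "(\<Sum>k\<in>V. dv f k / X k * X k) = 2"
proof -
  obtain u w where uw: "epair adj f = (u,w)" by fastforce
  note D = epairD[OF assms(1) uw]
  have xuw: "x u w > 0" using assms(2) xe_epair[OF uw] by simp
  have "X u > 0" "X w > 0" using X_posR[OF xuw] X_posR[of w u] xuw x_sym[of u w] by auto
  then have "\<And>k. dv f k / X k * X k = dv f k" using D unfolding dv_def by auto
  then show ?thesis using sum_dv[OF assms(1)] by simp
qed

lemma HD_zero: assumes f: "f \<in> EE" and fp: "xe f > 0" shows "HD f = 0"
proof -
  obtain u w where uw: "epair adj f = (u,w)" by fastforce
  note D = epairD[OF f uw]
  have xuw: "x u w > 0" using fp xe_epair[OF uw] by simp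
  have apuw: "ap u w > 0" using eqR(1)[OF xuw] .
  have ddx: "dd f k l \<noteq> 0 \<Longrightarrow> x k l > 0 \<and> ap k l > 0" for k l
    using D xuw apuw x_sym[of u w] ap_sym[of u w] unfolding dd_def by (auto simp: doubleton_eq_iff split: if_splits)
  define T where "T k l = 2*HH*dd f k l - HH*(x k l*(dv f k/X k)) - HH*(x k l*(dv f l/X l))" for k l
  have T: "ap k l*(2*x k l*dd f k l*(X k*X l) - (x k l)^2*(dv f k*X l + X k*dv f l))/(X k*X l)^2 = T k l"
    if "(k,l) \<in> PP" for k l
  proof (cases "x k l > 0")
    case True
    have Xk: "X k > 0" "X l > 0" using X_posR[OF True] X_posR[of l k] True x_sym[of k l] by auto
    have e: "ap k l * x k l = HH * (X k * X l)" using eqR(2)[OF True] Xk by (simp add: field_simps)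
    have "ap k l*(2*x k l*dd f k l*(X k*X l) - (x k l)^2*(dv f k*X l + X k*dv f l))/(X k*X l)^2
       = (ap k l * x k l)*(2*dd f k l*(X k*X l) - (x k l)*(dv f k*X l + X k*dv f l))/(X k*X l)^2"
      by (simp add: power2_eq_square algebra_simps)
    also have "\<dots> = T k l" unfolding e T_def using Xk by (simp add: field_simps power2_eq_square)
    finally show ?thesis .
  next
    case False
    then have "x k l = 0" using x_zero by blast
    moreover have "dd f k l = 0" using ddx False by blast
    ultimately show ?thesis unfolding T_def by simp
  qed
  have "HD f = (\<Sum>(k,l)\<in>PP. T k l)" unfolding HD_def using T by (intro sum.cong) auto
  also have "\<dots> = (\<Sum>(k,l)\<in>V \<times> V. T k l)"
  proof (rule sum.mono_neutral_left)
    show "finite (V \<times> V)" using finV by simp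
    show "PP \<subseteq> V \<times> V" unfolding PP_def by auto
    show "\<forall>i\<in>V \<times> V - PP. (case i of (k,l) \<Rightarrow> T k l) = 0"
    proof
      fix kl assume "kl \<in> V \<times> V - PP"
      then obtain k l where kl: "kl = (k,l)" "k \<in> V" "l \<in> V" "\<not> ap k l > 0" unfolding PP_def by auto
      have "x k l = 0" using kl eqR(1) x_zero by blast
      moreover have "dd f k l = 0" using ddx kl by blast
      ultimately show "(case kl of (k,l) \<Rightarrow> T k l) = 0" unfolding kl T_def by simp
    qed
  qed
  also have "\<dots> = (\<Sum>k\<in>V. \<Sum>l\<in>V. T k l)" by (simp add: sum.cartesian_product)
  also have "\<dots> = 2*HH*(\<Sum>k\<in>V. \<Sum>l\<in>V. dd f k l) - HH*(\<Sum>k\<in>V. \<Sum>l\<in>V. x k l*(dv f k/X k))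
       - HH*(\<Sum>k\<in>V. \<Sum>l\<in>V. x k l*(dv f l/X l))"
    unfolding T_def by (simp add: sum.distrib sum_subtractf sum_distrib_left)
  also have "(\<Sum>k\<in>V. \<Sum>l\<in>V. dd f k l) = 2" using sum_dd[OF f] sum_dv[OF f] by simp
  also have "(\<Sum>k\<in>V. \<Sum>l\<in>V. x k l*(dv f k/X k)) = 2"
  proof -
    have "\<And>k. (\<Sum>l\<in>V. x k l*(dv f k/X k)) = dv f k/X k * X k"
      unfolding xv_def sum_distrib_right[symmetric] by (rule mult.commute)
    then have "(\<Sum>k\<in>V. \<Sum>l\<in>V. x k l*(dv f k/X k)) = (\<Sum>k\<in>V. dv f k/X k * X k)" by simp
    then show ?thesis using sum_dvX[OF f fp] by simp
  qed
  also have "(\<Sum>k\<in>V. \<Sum>l\<in>V. x k l*(dv f l/X l)) = 2"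
  proof -
    have "(\<Sum>k\<in>V. \<Sum>l\<in>V. x k l*(dv f l/X l)) = (\<Sum>l\<in>V. \<Sum>k\<in>V. x l k*(dv f l/X l))"
      by (subst sum.swap) (simp add: x_sym)
    also have "\<dots> = (\<Sum>l\<in>V. dv f l/X l * X l)"
    proof -
      have "\<And>l. (\<Sum>k\<in>V. x l k*(dv f l/X l)) = dv f l/X l * X l"
        unfolding xv_def sum_distrib_right[symmetric] by (rule mult.commute)
      then show ?thesis by simp
    qed
    finally show ?thesis using sum_dvX[OF f fp] by simp
  qed
  finally show ?thesis by simp
qed

lemma Jac_pos: assumes e: "e \<in> EE" "epair adj e = (i,j)" and f: "f \<in> EE" and ep: "xe e > 0" and fp: "xe f > 0"
  shows "Jac V adj a p x e f = HH*((if e = f then 1 else 0) - x i j*(dv f i / X i + dv f j / X j))"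
proof -
  have xij: "x i j > 0" using ep xe_epair[OF e(2)] by simp
  have apij: "ap i j > 0" and eq: "ap i j * x i j / (X i * X j) = HH" using eqR[OF xij] by auto
  have Xk: "X i > 0" "X j > 0" using X_posR[OF xij] X_posR[of j i] xij x_sym[of i j] by auto
  have nz: "a i j \<noteq> 0" "p i j \<noteq> 0" using apij by auto
  have y: "yf V a p x i j = HH" using eq nz unfolding yf_def by simp
  have e2: "ap i j * x i j = HH * (X i * X j)" using eq Xk by (simp add: field_simps)
  have "x i j * YD i j f = (ap i j * x i j)*(dd f i j*(X i*X j) - x i j*(dv f i*X j + X i*dv f j))/(X i*X j)^2"
    unfolding YD_def using nz by simp
  also have "\<dots> = HH*(dd f i j - x i j*(dv f i / X i + dv f j / X j))"
    unfolding e2 using Xk by (simp add: field_simps power2_eq_square)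
  finally have "x i j * YD i j f = HH*(dd f i j - x i j*(dv f i / X i + dv f j / X j))" .
  then show ?thesis using Jac_formula[OF e f] y HD_zero[OF f fp] dd_e[OF e, of f] by (simp add: algebra_simps)
qed

end



context eqs begin

definition "deg2 u = (\<exists>j k. j \<noteq> k \<and> 0 < x u j \<and> 0 < x u k)"
definition "bad = (\<exists>u v. 0 < x u v \<and> deg2 u \<and> deg2 v)"

lemma R_irr: "\<not> 0 < x i i" using R_adj irr by blast

lemma reach: assumes "deg2 u" "\<not> bad" "(\<lambda>i j. 0 < x i j)\<^sup>*\<^sup>* u w" shows "w = u \<or> 0 < x u w"
  using assms(3)
proof (induction rule: rtranclp_induct)
  case base then show ?case by simp
next
  case (step w z)
  show ?case
  proof (cases "w = u")
    case True then show ?thesis using step by simp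
  next
    case False
    then have uw: "0 < x u w" using step by simp
    then have "\<not> deg2 w" using assms(1,2) unfolding bad_def by blast
    moreover have "0 < x w u" using uw x_sym by simp
    ultimately have "z = u" using step(2) unfolding deg2_def by blast
    then show ?thesis by simp
  qed
qed

lemma leafX: assumes "\<not> deg2 w" "0 < x w m" shows "X w = x w m" "\<And>l. 0 < x w l \<Longrightarrow> l = m"
proof -
  show uq: "\<And>l. 0 < x w l \<Longrightarrow> l = m" using assms unfolding deg2_def by blast
  have mV: "m \<in> V" using R_adj[OF assms(2)] adjV by blast
  have "x w l = (if l = m then x w m else 0)" for l
  proof (cases "l = m")
    case False
    then have "\<not> 0 < x w l" using uq by blast
    then show ?thesis using False x_zero by simp
  qed simp
  then have "X w = (\<Sum>l\<in>V. if l = m then x w m else 0)" unfolding xv_def by simp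
  then show "X w = x w m" using mV finV by simp
qed

lemma share: assumes nb: "\<not> bad" and wa: "0 < x w a1" and wb: "0 < x w b1" shows "ap w a1 = ap w b1"
proof (cases "a1 = b1")
  case True then show ?thesis by simp
next
  case False
  then have dw: "deg2 w" using wa wb unfolding deg2_def by blast
  have na: "\<not> deg2 a1" using nb dw wa unfolding bad_def by blast
  have nb': "\<not> deg2 b1" using nb dw wb unfolding bad_def by blast
  have aw: "0 < x a1 w" "0 < x b1 w" using wa wb x_sym by auto
  have Xa: "X a1 = x w a1" using leafX(1)[OF na aw(1)] x_sym by simp
  have Xb: "X b1 = x w b1" using leafX(1)[OF nb' aw(2)] x_sym by simp
  have Xw: "X w > 0" using X_posR[OF wa] .
  have "ap w a1 / X w = HH" using eqR(2)[OF wa] Xa wa Xw by (simp add: field_simps)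
  moreover have "ap w b1 / X w = HH" using eqR(2)[OF wb] Xb wb Xw by (simp add: field_simps)
  ultimately show ?thesis using Xw by (simp add: field_simps)
qed

lemma P_iff: "P_graph V adj a p (\<lambda>i j. 0 < x i j) \<longleftrightarrow> \<not> bad"
proof
  assume P: "P_graph V adj a p (\<lambda>i j. 0 < x i j)"
  show "\<not> bad"
  proof
    assume bad
    then obtain u v where uv: "0 < x u v" "deg2 u" "deg2 v" unfolding bad_def by blast
    have "(\<lambda>i j. 0 < x i j)\<^sup>*\<^sup>* u v" using uv(1) by auto
    then have "u = v" using P uv unfolding P_graph_def deg2_def by blast
    then show False using uv(1) R_irr by simp
  qed
next
  assume nb: "\<not> bad"
  have c1: "ap i j = ap k l \<and> ap i j > 0"
    if ij: "0 < x i j" and kl: "0 < x k l" and r: "(\<lambda>i j. 0 < x i j)\<^sup>*\<^sup>* i k" for i j k l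
  proof -
    have "\<forall>l. 0 < x k l \<longrightarrow> ap k l = ap i j" using r
    proof (induction rule: rtranclp_induct)
      case base then show ?case using share[OF nb ij] by auto
    next
      case (step k k')
      show ?case
      proof (intro allI impI)
        fix l assume l: "0 < x k' l"
        have kk: "0 < x k' k" using step(2) x_sym by simp
        have "ap k' l = ap k' k" using share[OF nb l kk] .
        also have "\<dots> = ap k k'" using ap_sym by simp
        also have "\<dots> = ap i j" using step(3) step(2) by blast
        finally show "ap k' l = ap i j" .
      qed
    qed
    then show ?thesis using kl eqR(1)[OF ij] by auto
  qed
  have c2: "u = v" if r: "(\<lambda>i j. 0 < x i j)\<^sup>*\<^sup>* u v" and du: "deg2 u" and dv: "deg2 v" for u v
  proof -
    have "v = u \<or> 0 < x u v" using reach[OF du nb r] .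
    then show ?thesis using du dv nb unfolding bad_def by blast
  qed
  have c3: "(\<exists>j. 0 < x i j) \<longleftrightarrow> (\<exists>j. adj i j \<and> ap i j > 0)" if iV: "i \<in> V" for i
  proof
    assume "\<exists>j. 0 < x i j"
    then obtain j where "0 < x i j" by blast
    then show "\<exists>j. adj i j \<and> ap i j > 0" using R_adj eqR(1) by blast
  next
    assume h: "\<exists>j. adj i j \<and> ap i j > 0"
    then obtain j where "ap i j > 0" by blast
    have xDel: "x \<in> Delta V adj a p h1" using xG unfolding Gamma0_def Gamma_def by simp
    have nb': "\<not> (\<exists>i\<in>V. (\<exists>j. adj i j \<and> ap i j > 0) \<and> (\<Sum>j\<in>{j\<in>V. ap i j > 0}. x i j) = 0)"
      using notbd xDel unfolding bdDelta_def by simp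
    have "(\<Sum>j\<in>{j\<in>V. ap i j > 0}. x i j) \<noteq> 0" using nb' iV h by blast
    then have "\<exists>k\<in>{j\<in>V. ap i j > 0}. x i k \<noteq> 0"
      using sum.neutral[of "{j\<in>V. ap i j > 0}" "\<lambda>j. x i j"] by blast
    then show "\<exists>j. 0 < x i j" using x_nn by (auto simp: less_le)
  qed
  show "P_graph V adj a p (\<lambda>i j. 0 < x i j)"
    unfolding P_graph_def deg2_def[symmetric] using c1 c2 c3 by blast
qed

end



context eqs begin

lemma finEp: "finite Ep" unfolding Ep_def using finE by simp
lemma Ep_sub: "Ep \<subseteq> EE" unfolding Ep_def by auto

lemma cc_sum: assumes e: "e \<in> EE" "epair adj e = (i,j)"
  shows "dv f i / X i + dv f j / X j = (\<Sum>w\<in>V. dv e w * dv f w / X w)"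
proof -
  note D = epairD[OF e]
  have "(\<Sum>w\<in>V. dv e w * dv f w / X w) = (\<Sum>w\<in>{i,j}. dv e w * dv f w / X w)"
    by (rule sum.mono_neutral_right[OF finV]) (use D in \<open>auto simp: dv_def\<close>)
  also have "\<dots> = dv f i / X i + dv f j / X j" using D by (simp add: dv_def)
  finally show ?thesis by simp
qed

lemma Jac_pos': assumes e: "e \<in> Ep" and f: "f \<in> Ep"
  shows "Jac V adj a p x e f = HH*((if e = f then 1 else 0) - xe e * (\<Sum>w\<in>V. dv e w * dv f w / X w))"
proof -
  obtain i j where ij: "epair adj e = (i,j)" by fastforce
  have eE: "e \<in> EE" "xe e > 0" using e unfolding Ep_def by auto
  have fE: "f \<in> EE" "xe f > 0" using f unfolding Ep_def by auto
  show ?thesis using Jac_pos[OF eE(1) ij fE(1) eE(2) fE(2)] cc_sum[OF eE(1) ij, of f] xe_epair[OF ij] by simp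
qed

definition "Sc v w = (\<Sum>f\<in>Ep. complex_of_real (dv f w) * v f)"

lemma row_pos: assumes h0: "\<forall>f\<in>EE - Ep. v f = 0" and e: "e \<in> Ep"
  shows "(\<Sum>f\<in>EE. complex_of_real (Jac V adj a p x e f) * v f)
     = complex_of_real HH * (v e - complex_of_real (xe e) * (\<Sum>w\<in>V. complex_of_real (dv e w / X w) * Sc v w))"
proof -
  have "(\<Sum>f\<in>EE. complex_of_real (Jac V adj a p x e f) * v f) = (\<Sum>f\<in>Ep. complex_of_real (Jac V adj a p x e f) * v f)"
    by (rule sum.mono_neutral_right[OF finE Ep_sub]) (use h0 in auto)
  also have "\<dots> = (\<Sum>f\<in>Ep. complex_of_real HH * ((if e = f then v f else 0)
        - complex_of_real (xe e) * (\<Sum>w\<in>V. complex_of_real (dv e w / X w) * (complex_of_real (dv f w) * v f))))"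
  proof (rule sum.cong[OF refl])
    fix f assume f: "f \<in> Ep"
    have s: "complex_of_real (\<Sum>w\<in>V. dv e w * dv f w / X w) * v f
        = (\<Sum>w\<in>V. complex_of_real (dv e w / X w) * (complex_of_real (dv f w) * v f))"
      unfolding of_real_sum sum_distrib_right by (rule sum.cong) (simp_all add: mult_ac)
    show "complex_of_real (Jac V adj a p x e f) * v f = complex_of_real HH * ((if e = f then v f else 0)
        - complex_of_real (xe e) * (\<Sum>w\<in>V. complex_of_real (dv e w / X w) * (complex_of_real (dv f w) * v f)))"
      unfolding Jac_pos'[OF e f] s[symmetric] by (simp add: algebra_simps)
  qed
  also have "\<dots> = complex_of_real HH * ((\<Sum>f\<in>Ep. (if e = f then v f else 0))
        - complex_of_real (xe e) * (\<Sum>f\<in>Ep. \<Sum>w\<in>V. complex_of_real (dv e w / X w) * (complex_of_real (dv f w) * v f)))"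
    by (simp only: right_diff_distrib sum_subtractf sum_distrib_left)
  also have "(\<Sum>f\<in>Ep. (if e = f then v f else 0)) = v e" using e finEp by simp
  also have "(\<Sum>f\<in>Ep. \<Sum>w\<in>V. complex_of_real (dv e w / X w) * (complex_of_real (dv f w) * v f))
      = (\<Sum>w\<in>V. complex_of_real (dv e w / X w) * Sc v w)"
    unfolding Sc_def by (subst sum.swap) (simp add: sum_distrib_left)
  finally show ?thesis .
qed

lemma cnj_self: "cnj z * z = complex_of_real ((cmod z)^2)"
  using complex_norm_square[of z] by (simp add: mult.commute)

definition "Aq v = (\<Sum>e\<in>Ep. (cmod (v e))^2 / xe e)"
definition "Bq v = (\<Sum>w\<in>V. (cmod (Sc v w))^2 / X w)"

lemma cnj_Sc: "cnj (Sc v w) = (\<Sum>e\<in>Ep. complex_of_real (dv e w) * cnj (v e))"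
  unfolding Sc_def by (simp add: cnj_sum)

lemma B_id: "(\<Sum>e\<in>Ep. cnj (v e) * (\<Sum>w\<in>V. complex_of_real (dv e w / X w) * Sc v w)) = complex_of_real (Bq v)"
proof -
  have "(\<Sum>e\<in>Ep. cnj (v e) * (\<Sum>w\<in>V. complex_of_real (dv e w / X w) * Sc v w))
      = (\<Sum>e\<in>Ep. \<Sum>w\<in>V. cnj (v e) * (complex_of_real (dv e w / X w) * Sc v w))"
    by (simp only: sum_distrib_left)
  also have "\<dots> = (\<Sum>w\<in>V. \<Sum>e\<in>Ep. cnj (v e) * (complex_of_real (dv e w / X w) * Sc v w))"
    by (rule sum.swap)
  also have "\<dots> = (\<Sum>w\<in>V. cnj (Sc v w) * Sc v w / complex_of_real (X w))"
  proof (rule sum.cong[OF refl])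
    fix w
    have "(\<Sum>e\<in>Ep. cnj (v e) * (complex_of_real (dv e w / X w) * Sc v w))
       = (\<Sum>e\<in>Ep. complex_of_real (dv e w) * cnj (v e)) * (Sc v w / complex_of_real (X w))"
      unfolding sum_distrib_right by (rule sum.cong) (simp_all add: mult_ac)
    then show "(\<Sum>e\<in>Ep. cnj (v e) * (complex_of_real (dv e w / X w) * Sc v w)) = cnj (Sc v w) * Sc v w / complex_of_real (X w)"
      unfolding cnj_Sc by simp
  qed
  also have "\<dots> = complex_of_real (Bq v)"
    unfolding Bq_def of_real_sum by (rule sum.cong) (simp_all add: cnj_self)
  finally show ?thesis .
qed

lemma eig_main: assumes ev: "\<forall>e\<in>EE. (\<Sum>f\<in>EE. complex_of_real (Jac V adj a p x e f) * v f) = mu * v e"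
  and h0: "\<forall>f\<in>EE - Ep. v f = 0"
  shows "mu * complex_of_real (Aq v) = complex_of_real (HH * (Aq v - Bq v))"
proof -
  define Q where "Q e = (\<Sum>w\<in>V. complex_of_real (dv e w / X w) * Sc v w)" for e
  have row: "mu * v e = complex_of_real HH * (v e - complex_of_real (xe e) * Q e)" if "e \<in> Ep" for e
    using ev row_pos[OF h0 that] that Ep_sub unfolding Q_def by auto
  have xnz: "complex_of_real (xe e) \<noteq> 0" if "e \<in> Ep" for e using that unfolding Ep_def by auto
  have A: "complex_of_real (Aq v) = (\<Sum>e\<in>Ep. cnj (v e) * v e / complex_of_real (xe e))"
    unfolding Aq_def of_real_sum by (rule sum.cong) (simp_all add: cnj_self)
  have "mu * complex_of_real (Aq v) = (\<Sum>e\<in>Ep. cnj (v e) / complex_of_real (xe e) * (mu * v e))"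
    unfolding A sum_distrib_left by (rule sum.cong) (simp_all add: mult_ac)
  also have "\<dots> = (\<Sum>e\<in>Ep. complex_of_real HH * (cnj (v e) * v e / complex_of_real (xe e)) - complex_of_real HH * (cnj (v e) * Q e))"
  proof (rule sum.cong[OF refl])
    fix e assume e: "e \<in> Ep"
    show "cnj (v e) / complex_of_real (xe e) * (mu * v e) = complex_of_real HH * (cnj (v e) * v e / complex_of_real (xe e)) - complex_of_real HH * (cnj (v e) * Q e)"
      unfolding row[OF e] using xnz[OF e] by (simp add: field_simps)
  qed
  also have "\<dots> = complex_of_real HH * complex_of_real (Aq v) - complex_of_real HH * complex_of_real (Bq v)"
    unfolding A B_id[of v, symmetric] Q_def by (simp only: sum_subtractf sum_distrib_left)
  finally show ?thesis by (simp add: algebra_simps)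
qed

end



context eqs begin

lemma xe_nn: "e \<in> EE \<Longrightarrow> 0 \<le> xe e" unfolding xe_def using x_nn by (simp add: case_prod_beta)

definition "lf e = (case epair adj e of (i,j) \<Rightarrow> if deg2 i then j else i)"

lemma lf_props: assumes nb: "\<not> bad" and e: "e \<in> Ep"
  shows "\<exists>m. \<not> deg2 (lf e) \<and> 0 < x (lf e) m \<and> e = {lf e, m} \<and> lf e \<in> V"
proof -
  obtain i j where ij: "epair adj e = (i,j)" by fastforce
  have eE: "e \<in> EE" "xe e > 0" using e unfolding Ep_def by auto
  note D = epairD[OF eE(1) ij]
  have xij: "0 < x i j" using eE(2) xe_epair[OF ij] by simp
  show ?thesis
  proof (cases "deg2 i")
    case True
    then have "\<not> deg2 j" using nb xij unfolding bad_def by blast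
    moreover have "0 < x j i" using xij x_sym by simp
    ultimately show ?thesis using True D unfolding lf_def ij by (intro exI[of _ i]) auto
  next
    case False
    then show ?thesis using xij D unfolding lf_def ij by (intro exI[of _ j]) auto
  qed
qed

lemma Sc_leaf: assumes nd: "\<not> deg2 w" and wm: "0 < x w m" shows "Sc v w = v {w,m}"
proof -
  have adj: "adj w m" using R_adj[OF wm] .
  have mem: "{w,m} \<in> Ep" unfolding Ep_def using edge_iff adj xe_pair[OF adj] wm by simp
  have dvf: "dv f w = (if f = {w,m} then 1 else 0)" if f: "f \<in> Ep" for f
  proof -
    obtain k l where kl: "epair adj f = (k,l)" by fastforce
    have fE: "f \<in> EE" "xe f > 0" using f unfolding Ep_def by auto
    note D = epairD[OF fE(1) kl]
    have xkl: "0 < x k l" using fE(2) xe_epair[OF kl] by simp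
    have "w \<in> f \<longleftrightarrow> f = {w,m}"
    proof
      assume "w \<in> f"
      then have "w = k \<or> w = l" using D by auto
      then show "f = {w,m}"
      proof
        assume "w = k" then have "l = m" using leafX(2)[OF nd wm] xkl by blast
        then show ?thesis using D \<open>w = k\<close> by simp
      next
        assume "w = l" then have "k = m" using leafX(2)[OF nd wm] xkl x_sym[of k l] by auto
        then show ?thesis using D \<open>w = l\<close> by auto
      qed
    qed simp
    then show ?thesis unfolding dv_def by simp
  qed
  have "Sc v w = (\<Sum>f\<in>Ep. if f = {w,m} then v f else 0)"
    unfolding Sc_def by (rule sum.cong) (simp_all add: dvf)
  also have "\<dots> = v {w,m}" using mem finEp by simp
  finally show ?thesis .
qed

lemma A_le_B: assumes nb: "\<not> bad" shows "Aq v \<le> Bq v"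
proof -
  define g where "g w = (cmod (Sc v w))^2 / X w" for w
  have each: "(cmod (v e))^2 / xe e = g (lf e)" if e: "e \<in> Ep" for e
  proof -
    obtain m where m: "\<not> deg2 (lf e)" "0 < x (lf e) m" "e = {lf e, m}" "lf e \<in> V"
      using lf_props[OF nb e] by blast
    have "Sc v (lf e) = v e" using Sc_leaf[OF m(1,2)] m(3) by simp
    moreover have "X (lf e) = xe e" using leafX(1)[OF m(1,2)] xe_pair[OF R_adj[OF m(2)]] m(3) by simp
    ultimately show ?thesis unfolding g_def by simp
  qed
  have inj: "inj_on lf Ep"
  proof
    fix e1 e2 assume e1: "e1 \<in> Ep" and e2: "e2 \<in> Ep" and eq: "lf e1 = lf e2"
    obtain m1 where m1: "\<not> deg2 (lf e1)" "0 < x (lf e1) m1" "e1 = {lf e1, m1}" using lf_props[OF nb e1] by blast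
    obtain m2 where m2: "\<not> deg2 (lf e2)" "0 < x (lf e2) m2" "e2 = {lf e2, m2}" using lf_props[OF nb e2] by blast
    have "m1 = m2" using leafX(2)[OF m1(1,2)] m2(2) eq by simp
    then show "e1 = e2" using m1(3) m2(3) eq by simp
  qed
  have sub: "lf ` Ep \<subseteq> V" using lf_props[OF nb] by blast
  have "Aq v = (\<Sum>e\<in>Ep. g (lf e))" unfolding Aq_def using each by simp
  also have "\<dots> = (\<Sum>w\<in>lf ` Ep. g w)" using sum.reindex[OF inj, of g] by simp
  also have "\<dots> \<le> (\<Sum>w\<in>V. g w)"
    by (rule sum_mono2[OF finV sub]) (simp add: g_def X_nn)
  finally show ?thesis unfolding Bq_def g_def .
qed

lemma Aq_pos: assumes "e \<in> Ep" "v e \<noteq> 0" shows "0 < Aq v"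
  unfolding Aq_def
proof (rule sum_pos2[OF finEp assms(1)])
  show "0 < (cmod (v e))\<^sup>2 / xe e" using assms unfolding Ep_def by simp
  show "\<And>i. i \<in> Ep \<Longrightarrow> 0 \<le> (cmod (v i))\<^sup>2 / xe i" unfolding Ep_def by simp
qed

lemma eig_cases: assumes ev: "\<forall>e\<in>EE. (\<Sum>f\<in>EE. complex_of_real (Jac V adj a p x e f) * v f) = mu * v e"
  and nz: "\<exists>e\<in>EE. v e \<noteq> 0"
  shows "mu = - complex_of_real HH \<or> ((\<forall>f\<in>EE - Ep. v f = 0) \<and> 0 < Aq v
     \<and> mu = complex_of_real (HH * (Aq v - Bq v) / Aq v))"
proof (cases "\<exists>e\<in>EE - Ep. v e \<noteq> 0")
  case True
  then obtain e where e: "e \<in> EE" "e \<notin> Ep" "v e \<noteq> 0" by blast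
  have xz: "xe e = 0" using e xe_nn[OF e(1)] unfolding Ep_def by auto
  have "(\<Sum>f\<in>EE. complex_of_real (Jac V adj a p x e f) * v f) = (\<Sum>f\<in>EE. if f = e then - complex_of_real HH * v f else 0)"
    by (rule sum.cong) (simp_all add: Jac_zero[OF e(1) _ xz])
  also have "\<dots> = - complex_of_real HH * v e" using e(1) finE by simp
  finally have "mu * v e = - complex_of_real HH * v e" using ev e(1) by simp
  then have "(mu + complex_of_real HH) * v e = 0" by (simp add: algebra_simps)
  then have "mu + complex_of_real HH = 0" using e(3) by simp
  then show ?thesis by (simp add: eq_neg_iff_add_eq_0)
next
  case False
  then have h0: "\<forall>f\<in>EE - Ep. v f = 0" by blast
  obtain e where e: "e \<in> EE" "v e \<noteq> 0" using nz by blast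
  then have "e \<in> Ep" using h0 by blast
  then have A: "0 < Aq v" using Aq_pos e(2) by blast
  have "mu * complex_of_real (Aq v) = complex_of_real (HH * (Aq v - Bq v))" using eig_main[OF ev h0] .
  then have "mu = complex_of_real (HH * (Aq v - Bq v)) / complex_of_real (Aq v)"
    using A by (simp add: field_simps)
  then show ?thesis using h0 A by simp
qed

lemma stable: assumes nb: "\<not> bad" and ei: "is_eigenvalue EE (Jac V adj a p x) mu" shows "Re mu \<le> 0"
proof -
  obtain v where nz: "\<exists>e\<in>EE. v e \<noteq> 0"
    and ev: "\<forall>e\<in>EE. (\<Sum>f\<in>EE. complex_of_real (Jac V adj a p x e f) * v f) = mu * v e"
    using ei unfolding is_eigenvalue_def by blast
  show ?thesis
  proof (cases "mu = - complex_of_real HH")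
    case True then show ?thesis using H_pos by simp
  next
    case False
    then have A: "0 < Aq v" and mu: "mu = complex_of_real (HH * (Aq v - Bq v) / Aq v)"
      using eig_cases[OF ev nz] by auto
    have "HH * (Aq v - Bq v) / Aq v \<le> 0"
      using A A_le_B[OF nb, of v] H_pos by (intro divide_nonpos_pos mult_nonneg_nonpos) auto
    then show ?thesis using mu by simp
  qed
qed

end



lemma normD: assumes "is_norm_on E N" "\<forall>e. e \<notin> E \<longrightarrow> \<theta> e = 0" "\<forall>e. e \<notin> E \<longrightarrow> \<eta> e = 0"
  shows "(N \<theta> = 0 \<longleftrightarrow> \<theta> = (\<lambda>_. 0)) \<and> N (\<lambda>e. c * \<theta> e) = \<bar>c\<bar> * N \<theta>
      \<and> N (\<lambda>e. \<theta> e + \<eta> e) \<le> N \<theta> + N \<eta>"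
  using assms(1) unfolding is_norm_on_def
  apply (erule_tac allE[of _ \<theta>])
  apply (erule_tac allE[of _ \<eta>])
  apply (erule_tac allE[of _ c])
  using assms(2,3) by blast

lemma norm_nn: assumes N: "is_norm_on E N" and s: "\<forall>e. e \<notin> E \<longrightarrow> \<theta> e = 0" shows "0 \<le> N \<theta>"
proof -
  have s': "\<forall>e. e \<notin> E \<longrightarrow> (-1) * \<theta> e = 0" using s by simp
  have z: "\<forall>e. e \<notin> E \<longrightarrow> (\<lambda>_. 0::real) e = 0" by simp
  have h0: "N (\<lambda>e. (-1) * \<theta> e) = \<bar>-1\<bar> * N \<theta>" using normD[OF N s s] by blast
  then have h: "N (\<lambda>e. (-1) * \<theta> e) = N \<theta>" by simp
  have t: "N (\<lambda>e. \<theta> e + (-1) * \<theta> e) \<le> N \<theta> + N (\<lambda>e. (-1) * \<theta> e)"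
    using normD[OF N s s', of 1] by blast
  have "N (\<lambda>_. 0) = 0" using normD[OF N z z, of 1] by blast
  then show ?thesis using t h by simp
qed

lemma normalize: assumes N: "is_norm_on E N" and s: "\<forall>e. e \<notin> E \<longrightarrow> \<theta> e = 0" and nz: "\<theta> e0 \<noteq> 0"
  shows "0 < N \<theta>" "N (\<lambda>e. \<theta> e / N \<theta>) = 1"
proof -
  have "\<theta> \<noteq> (\<lambda>_. 0)" using nz by auto
  then have "N \<theta> \<noteq> 0" using normD[OF N s s, of 1] by blast
  then show pos: "0 < N \<theta>" using norm_nn[OF N s] by simp
  have "N (\<lambda>e. (1 / N \<theta>) * \<theta> e) = \<bar>1 / N \<theta>\<bar> * N \<theta>" using normD[OF N s s, of "1 / N \<theta>"] by blast
  then show "N (\<lambda>e. \<theta> e / N \<theta>) = 1" using pos by simp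
qed

context eqs begin

lemma real_eig_to_theta: assumes N: "is_norm_on EE nrm"
  and w0: "\<forall>e. e \<notin> EE \<longrightarrow> w e = 0"
  and ev: "\<forall>e\<in>EE. (\<Sum>f\<in>EE. Jac V adj a p x e f * w f) = r * w e"
  and e0: "e0 \<in> Ep" "w e0 \<noteq> 0" and r: "r > 0"
  shows "\<exists>(\<theta> :: 'v set \<Rightarrow> real) (mu :: complex).
           Re mu > 0
         \<and> (\<forall>e. e \<notin> EE \<longrightarrow> \<theta> e = 0)
         \<and> (\<forall>e\<in>EE. (\<Sum>f\<in>EE. complex_of_real (Jac V adj a p x e f * \<theta> f))
                = mu * complex_of_real (\<theta> e))
         \<and> nrm \<theta> = 1
         \<and> (\<exists>e\<in>EE. case_prod x (epair adj e) > 0 \<and> \<theta> e \<noteq> 0)"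
proof -
  note NN = normalize[OF N w0 e0(2)]
  define \<theta> where "\<theta> e = w e / nrm w" for e
  have "\<forall>e\<in>EE. (\<Sum>f\<in>EE. complex_of_real (Jac V adj a p x e f * \<theta> f)) = complex_of_real r * complex_of_real (\<theta> e)"
  proof
    fix e assume e: "e \<in> EE"
    have "(\<Sum>f\<in>EE. Jac V adj a p x e f * \<theta> f) = (\<Sum>f\<in>EE. Jac V adj a p x e f * w f) / nrm w"
      unfolding \<theta>_def by (simp add: sum_divide_distrib)
    also have "\<dots> = r * \<theta> e" using ev e unfolding \<theta>_def by simp
    finally show "(\<Sum>f\<in>EE. complex_of_real (Jac V adj a p x e f * \<theta> f)) = complex_of_real r * complex_of_real (\<theta> e)"
      by (metis of_real_mult of_real_sum)
  qed
  moreover have "\<forall>e. e \<notin> EE \<longrightarrow> \<theta> e = 0" using w0 unfolding \<theta>_def by simp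
  moreover have "nrm \<theta> = 1" using NN(2) unfolding \<theta>_def .
  moreover have "\<exists>e\<in>EE. case_prod x (epair adj e) > 0 \<and> \<theta> e \<noteq> 0"
    using e0 NN(1) unfolding \<theta>_def Ep_def xe_def by auto
  moreover have "Re (complex_of_real r) > 0" using r by simp
  ultimately show ?thesis by blast
qed

lemma partb: assumes N: "is_norm_on EE nrm" and ei: "is_eigenvalue EE (Jac V adj a p x) mu" and mu: "Re mu > 0"
  shows "\<exists>(\<theta> :: 'v set \<Rightarrow> real) (mu :: complex).
           Re mu > 0
         \<and> (\<forall>e. e \<notin> EE \<longrightarrow> \<theta> e = 0)
         \<and> (\<forall>e\<in>EE. (\<Sum>f\<in>EE. complex_of_real (Jac V adj a p x e f * \<theta> f))
                = mu * complex_of_real (\<theta> e))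
         \<and> nrm \<theta> = 1
         \<and> (\<exists>e\<in>EE. case_prod x (epair adj e) > 0 \<and> \<theta> e \<noteq> 0)"
proof -
  obtain v where nz: "\<exists>e\<in>EE. v e \<noteq> 0"
    and ev: "\<forall>e\<in>EE. (\<Sum>f\<in>EE. complex_of_real (Jac V adj a p x e f) * v f) = mu * v e"
    using ei unfolding is_eigenvalue_def by blast
  have "mu \<noteq> - complex_of_real HH" using mu H_pos by auto
  then have h0: "\<forall>f\<in>EE - Ep. v f = 0" and mur: "mu = complex_of_real (HH * (Aq v - Bq v) / Aq v)"
    using eig_cases[OF ev nz] by auto
  define r where "r = HH * (Aq v - Bq v) / Aq v"
  have r: "r > 0" using mu mur unfolding r_def by simp
  obtain e0 where e0: "e0 \<in> EE" "v e0 \<noteq> 0" using nz by blast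
  then have e0p: "e0 \<in> Ep" using h0 by blast
  have evr: "(\<Sum>f\<in>EE. complex_of_real (Jac V adj a p x e f) * v f) = complex_of_real r * v e" if "e \<in> EE" for e
    using ev that mur unfolding r_def by simp
  have evRe: "(\<Sum>f\<in>EE. Jac V adj a p x e f * Re (v f)) = r * Re (v e)" if "e \<in> EE" for e
  proof -
    have "Re (\<Sum>f\<in>EE. complex_of_real (Jac V adj a p x e f) * v f) = Re (complex_of_real r * v e)" using evr[OF that] by simp
    then show ?thesis by (simp add: Re_sum)
  qed
  have evIm: "(\<Sum>f\<in>EE. Jac V adj a p x e f * Im (v f)) = r * Im (v e)" if "e \<in> EE" for e
  proof -
    have "Im (\<Sum>f\<in>EE. complex_of_real (Jac V adj a p x e f) * v f) = Im (complex_of_real r * v e)" using evr[OF that] by simp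
    then show ?thesis by (simp add: Im_sum)
  qed
  show ?thesis
  proof (cases "Re (v e0) = 0")
    case False
    define w where "w e = (if e \<in> EE then Re (v e) else 0)" for e
    have "\<forall>e\<in>EE. (\<Sum>f\<in>EE. Jac V adj a p x e f * w f) = r * w e"
      using evRe unfolding w_def by simp
    moreover have "\<forall>e. e \<notin> EE \<longrightarrow> w e = 0" unfolding w_def by simp
    moreover have "w e0 \<noteq> 0" using False e0 unfolding w_def by simp
    ultimately show ?thesis using real_eig_to_theta[OF N _ _ e0p _ r] by blast
  next
    case True
    then have "Im (v e0) \<noteq> 0" using e0(2) complex_eq_iff by auto
    define w where "w e = (if e \<in> EE then Im (v e) else 0)" for e
    have "\<forall>e\<in>EE. (\<Sum>f\<in>EE. Jac V adj a p x e f * w f) = r * w e"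
      using evIm unfolding w_def by simp
    moreover have "\<forall>e. e \<notin> EE \<longrightarrow> w e = 0" unfolding w_def by simp
    moreover have "w e0 \<noteq> 0" using \<open>Im (v e0) \<noteq> 0\<close> e0 unfolding w_def by simp
    ultimately show ?thesis using real_eig_to_theta[OF N _ _ e0p _ r] by blast
  qed
qed

end



lemma harm: fixes p1 q :: real assumes "p1 > 0" "q > 0" shows "4 / (p1 + q) \<le> 1/p1 + 1/q"
proof -
  have "1/p1 + 1/q - 4/(p1+q) = (p1-q)^2/(p1*q*(p1+q))" using assms by (simp add: field_simps power2_eq_square)
  moreover have "(p1-q)^2/(p1*q*(p1+q)) \<ge> 0" using assms by simp
  ultimately show ?thesis by linarith
qed

context eqs begin

definition "Sr \<phi> w = (\<Sum>e\<in>Ep. dv e w * \<phi> e)"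
definition "Ar \<phi> = (\<Sum>e\<in>Ep. (\<phi> e)^2 / xe e)"
definition "Br \<phi> = (\<Sum>w\<in>V. (Sr \<phi> w)^2 / X w)"

lemma theta0: assumes bd: "bad" shows "\<exists>\<theta>. Br \<theta> < Ar \<theta>"
proof -
  obtain u v where uv: "0 < x u v" "deg2 u" "deg2 v" using bd unfolding bad_def by blast
  obtain a' where a': "a' \<noteq> v" "0 < x u a'"
  proof -
    obtain j k where "j \<noteq> k" "0 < x u j" "0 < x u k" using uv(2) unfolding deg2_def by blast
    then show ?thesis using that[of j] that[of k] by (cases "j = v") auto
  qed
  obtain b' where b': "b' \<noteq> u" "0 < x v b'"
  proof -
    obtain j k where "j \<noteq> k" "0 < x v j" "0 < x v k" using uv(3) unfolding deg2_def by blast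
    then show ?thesis using that[of j] that[of k] by (cases "j = u") auto
  qed
  have ne: "u \<noteq> v" "u \<noteq> a'" "v \<noteq> b'" using uv(1) a'(2) b'(2) R_irr by auto
  have adjs: "adj u v" "adj u a'" "adj v b'" using R_adj uv(1) a'(2) b'(2) by auto
  have V: "u \<in> V" "v \<in> V" "a' \<in> V" "b' \<in> V" using adjs adjV by auto
  define e0 where "e0 = {u,v}"
  define f1 where "f1 = {u,a'}"
  define g1 where "g1 = {v,b'}"
  have xes: "xe e0 = x u v" "xe f1 = x u a'" "xe g1 = x v b'"
    unfolding e0_def f1_def g1_def using xe_pair adjs by auto
  have inEp: "e0 \<in> Ep" "f1 \<in> Ep" "g1 \<in> Ep"
    unfolding Ep_def using xes edge_iff adjs uv(1) a'(2) b'(2) unfolding e0_def f1_def g1_def by auto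
  have dist: "e0 \<noteq> f1" "e0 \<noteq> g1" "f1 \<noteq> g1"
    unfolding e0_def f1_def g1_def using ne a'(1) b'(1) by (auto simp: doubleton_eq_iff)
  define \<theta> where "\<theta> e = (if e = e0 then 1 else if e = f1 then -1 else if e = g1 then -1 else (0::real))" for e
  have A: "Ar \<theta> = 1 / x u v + 1 / x u a' + 1 / x v b'"
  proof -
    have "Ar \<theta> = (\<Sum>e\<in>{e0,f1,g1}. (\<theta> e)^2 / xe e)" unfolding Ar_def
      by (rule sum.mono_neutral_right[OF finEp]) (use inEp in \<open>auto simp: \<theta>_def\<close>)
    also have "\<dots> = 1 / x u v + 1 / x u a' + 1 / x v b'" using dist xes by (simp add: \<theta>_def)
    finally show ?thesis .
  qed
  have S: "Sr \<theta> w = dv e0 w - dv f1 w - dv g1 w" for w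
  proof -
    have "Sr \<theta> w = (\<Sum>e\<in>{e0,f1,g1}. dv e w * \<theta> e)" unfolding Sr_def
      by (rule sum.mono_neutral_right[OF finEp]) (use inEp in \<open>auto simp: \<theta>_def\<close>)
    also have "\<dots> = dv e0 w - dv f1 w - dv g1 w" using dist by (simp add: \<theta>_def)
    finally show ?thesis .
  qed
  define h where "h w = (dv e0 w - dv f1 w - dv g1 w)^2 / X w" for w
  have hz: "h w = 0" if "w \<notin> {a',b'}" for w
    using that ne a'(1) b'(1) unfolding h_def dv_def e0_def f1_def g1_def by auto
  have B: "Br \<theta> = (\<Sum>w\<in>{a',b'}. h w)" unfolding Br_def S h_def[symmetric]
    by (rule sum.mono_neutral_right[OF finV]) (use V hz in auto)
  have pa: "0 < x u a'" "0 < x v b'" "0 < x u v" using a' b' uv by auto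
  have Xa: "x u a' \<le> X a'" using X_ge[OF V(1), of a'] x_sym[of u a'] by simp
  have Xb: "x v b' \<le> X b'" using X_ge[OF V(2), of b'] x_sym[of v b'] by simp
  show ?thesis
  proof (cases "a' = b'")
    case False
    have ha: "h a' = 1 / X a'" using False ne a'(1) b'(1) unfolding h_def dv_def e0_def f1_def g1_def by auto
    have hb: "h b' = 1 / X b'" using False ne a'(1) b'(1) unfolding h_def dv_def e0_def f1_def g1_def by auto
    have "Br \<theta> = 1 / X a' + 1 / X b'" using B False ha hb by simp
    also have "\<dots> \<le> 1 / x u a' + 1 / x v b'"
      using Xa Xb pa by (intro add_mono divide_left_mono) auto
    also have "\<dots> < Ar \<theta>" unfolding A using pa by simp
    finally show ?thesis by blast
  next
    case True
    have ha: "h a' = 4 / X a'" using True ne a'(1) b'(1) unfolding h_def dv_def e0_def f1_def g1_def by auto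
    have "x a' u + x a' v = (\<Sum>l\<in>{u,v}. x a' l)" using ne by simp
    also have "\<dots> \<le> X a'" unfolding xv_def by (rule sum_mono2[OF finV]) (use V x_nn in auto)
    finally have Xab: "x u a' + x v a' \<le> X a'" using x_sym[of a' u] x_sym[of a' v] by simp
    have pb: "0 < x v a'" using pa True by simp
    have "Br \<theta> = 4 / X a'" using B True ha by simp
    also have "\<dots> \<le> 4 / (x u a' + x v a')" using Xab pa pb by (intro divide_left_mono) auto
    also have "\<dots> \<le> 1 / x u a' + 1 / x v a'" using harm pa pb by blast
    also have "\<dots> < Ar \<theta>" unfolding A using pa True by simp
    finally show ?thesis by blast
  qed
qed

end



lemma quad_zero: fixes \<alpha> \<beta> :: real assumes "\<forall>t. 0 \<le> 2*t*\<alpha> + t^2*\<beta>" shows "\<alpha> = 0"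
proof (rule ccontr)
  assume a: "\<alpha> \<noteq> 0"
  define c where "c = \<bar>\<beta>\<bar> + 1"
  have c: "c > 0" unfolding c_def by simp
  define t where "t = -\<alpha>/c"
  have "2*t*\<alpha> + t^2*\<beta> = \<alpha>^2 * (\<beta> - 2*c)/c^2" unfolding t_def using c by (simp add: field_simps power2_eq_square)
  moreover have "\<alpha>^2 * (\<beta> - 2*c)/c^2 < 0" using a c unfolding c_def
    by (intro divide_neg_pos mult_pos_neg) auto
  ultimately show False using assms by (metis not_le)
qed

lemma exp_div: fixes a b t Y :: real shows "(a + t*b)^2 / Y = a^2/Y + 2*t*(a*b/Y) + t^2*(b^2/Y)"
  by (cases "Y = 0") (simp_all add: field_simps power2_eq_square)

lemma coord: "continuous_on A (\<lambda>\<phi>::'a \<Rightarrow> real. \<phi> e)"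
  by (rule continuous_on_subset[OF continuous_on_product_coordinates]) simp

context eqs begin

lemma Ar_nn: "0 \<le> Ar \<phi>" unfolding Ar_def by (rule sum_nonneg) (auto simp: Ep_def)
lemma Br_nn: "0 \<le> Br \<phi>" unfolding Br_def by (rule sum_nonneg) (simp add: X_nn)

lemma Ar_pos: assumes "e \<in> Ep" "\<phi> e \<noteq> 0" shows "0 < Ar \<phi>"
  unfolding Ar_def
proof (rule sum_pos2[OF finEp assms(1)])
  show "0 < (\<phi> e)\<^sup>2 / xe e" using assms unfolding Ep_def by simp
  show "\<And>i. i \<in> Ep \<Longrightarrow> 0 \<le> (\<phi> i)\<^sup>2 / xe i" unfolding Ep_def by simp
qed

lemma Br_zero: assumes "\<forall>e\<in>Ep. \<phi> e = 0" shows "Br \<phi> = 0"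
  unfolding Br_def Sr_def using assms by simp

lemma Sr_lin: "Sr (\<lambda>e. \<phi> e + t * \<psi> e) w = Sr \<phi> w + t * Sr \<psi> w"
  unfolding Sr_def by (simp add: sum.distrib sum_distrib_left algebra_simps)

definition "Bb \<phi> \<psi> = (\<Sum>w\<in>V. Sr \<phi> w * Sr \<psi> w / X w)"
definition "Ab \<phi> \<psi> = (\<Sum>e\<in>Ep. \<phi> e * \<psi> e / xe e)"

lemma Br_exp: "Br (\<lambda>e. \<phi> e + t*\<psi> e) = Br \<phi> + 2*t*Bb \<phi> \<psi> + t^2 * Br \<psi>"
  unfolding Br_def Bb_def Sr_lin exp_div by (simp add: sum.distrib sum_distrib_left)

lemma Ar_exp: "Ar (\<lambda>e. \<phi> e + t*\<psi> e) = Ar \<phi> + 2*t*Ab \<phi> \<psi> + t^2 * Ar \<psi>"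
  unfolding Ar_def Ab_def exp_div by (simp add: sum.distrib sum_distrib_left)

lemma minimizer: assumes th: "\<exists>\<theta>. Br \<theta> < Ar \<theta>"
  shows "\<exists>\<phi>. (\<forall>e. e \<notin> Ep \<longrightarrow> \<phi> e = 0) \<and> (\<exists>e\<in>Ep. \<phi> e \<noteq> 0) \<and> Br \<phi> < Ar \<phi>
     \<and> (\<forall>\<psi>. Br \<phi> / Ar \<phi> * Ar \<psi> \<le> Br \<psi>)"
proof -
  define S where "S e = (if e \<in> Ep then {-1..1} else {0::real})" for e
  define K where "K = PiE UNIV S \<inter> {\<phi>. (\<Sum>e\<in>Ep. (\<phi> e)^2) = 1}"
  define F where "F \<phi> = Br \<phi> / Ar \<phi>" for \<phi>
  have PiS: "\<phi> \<in> PiE UNIV S \<longleftrightarrow> (\<forall>e. \<phi> e \<in> S e)" for \<phi> by (simp add: PiE_UNIV_domain Pi_iff)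
  have c1: "compactin (product_topology (\<lambda>_. euclidean) UNIV) (PiE UNIV S)"
    by (subst compactin_PiE) (auto simp: S_def)
  then have c2: "compact (PiE UNIV S :: ('v set \<Rightarrow> real) set)"
    by (simp add: euclidean_product_topology)
  have cl: "closed {\<phi>::'v set \<Rightarrow> real. (\<Sum>e\<in>Ep. (\<phi> e)^2) = 1}"
    by (intro closed_Collect_eq continuous_intros coord)
  have cK: "compact K" unfolding K_def using c2 cl by blast
  have nm: "\<exists>\<psi>'\<in>K. F \<psi>' = F \<psi>" if nz: "\<exists>e\<in>Ep. \<psi> e \<noteq> 0" for \<psi>
  proof -
    define s2 where "s2 = (\<Sum>e\<in>Ep. (\<psi> e)^2)"
    obtain e0 where e0: "e0 \<in> Ep" "\<psi> e0 \<noteq> 0" using nz by blast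
    have s2p: "s2 > 0" unfolding s2_def
      by (rule sum_pos2[OF finEp e0(1)]) (use e0 in auto)
    define s where "s = sqrt s2"
    have sp: "s > 0" "s^2 = s2" unfolding s_def using s2p by auto
    define \<psi>' where "\<psi>' e = (if e \<in> Ep then \<psi> e / s else 0)" for e
    have "\<psi>' \<in> PiE UNIV S" unfolding PiS
    proof
      fix e show "\<psi>' e \<in> S e"
      proof (cases "e \<in> Ep")
        case True
        have "(\<psi> e)^2 \<le> s2" unfolding s2_def by (rule member_le_sum[OF True]) (simp_all add: finEp)
        then have "(\<psi> e)^2 \<le> s^2" using sp by simp
        then have "\<bar>\<psi> e\<bar> \<le> s" using power2_le_imp_le[of "\<bar>\<psi> e\<bar>" s] sp(1) by simp
        then have h: "\<bar>\<psi> e / s\<bar> \<le> 1" using sp(1) by (simp add: divide_le_eq_1)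
        have "\<psi> e / s \<le> 1" "- (\<psi> e / s) \<le> 1" using abs_le_D1[OF h] abs_le_D2[OF h] by auto
        then show ?thesis using True unfolding \<psi>'_def S_def by simp
      qed (simp add: \<psi>'_def S_def)
    qed
    moreover have "(\<Sum>e\<in>Ep. (\<psi>' e)^2) = 1"
    proof -
      have "(\<Sum>e\<in>Ep. (\<psi>' e)^2) = (\<Sum>e\<in>Ep. (\<psi> e)^2 / s^2)"
        by (rule sum.cong) (simp_all add: \<psi>'_def power_divide)
      also have "\<dots> = s2 / s^2" unfolding s2_def by (simp add: sum_divide_distrib)
      finally show ?thesis using sp s2p by simp
    qed
    ultimately have inK: "\<psi>' \<in> K" unfolding K_def by simp
    have Ar': "Ar \<psi>' = Ar \<psi> / s^2" unfolding Ar_def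
      by (simp add: sum_divide_distrib \<psi>'_def power_divide mult.commute cong: sum.cong)
    have Sr': "Sr \<psi>' w = Sr \<psi> w / s" for w unfolding Sr_def
      by (simp add: sum_divide_distrib \<psi>'_def cong: sum.cong)
    have Br': "Br \<psi>' = Br \<psi> / s^2" unfolding Br_def Sr' by (simp add: sum_divide_distrib power_divide mult.commute)
    have "F \<psi>' = F \<psi>" unfolding F_def Ar' Br' using sp s2p by simp
    then show ?thesis using inK by blast
  qed
  have Kpos: "0 < Ar \<phi>" if "\<phi> \<in> K" for \<phi>
  proof -
    have "(\<Sum>e\<in>Ep. (\<phi> e)^2) = 1" using that unfolding K_def by simp
    have "\<exists>e\<in>Ep. \<phi> e \<noteq> 0"
    proof (rule ccontr)
      assume "\<not> ?thesis" then have "\<forall>e\<in>Ep. \<phi> e = 0" by blast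
      then have "(\<Sum>e\<in>Ep. (\<phi> e)^2) = 0" by simp
      then show False using \<open>(\<Sum>e\<in>Ep. (\<phi> e)^2) = 1\<close> by simp
    qed
    then show ?thesis using Ar_pos by blast
  qed
  obtain \<theta> where th: "Br \<theta> < Ar \<theta>" using th by blast
  have thnz: "\<exists>e\<in>Ep. \<theta> e \<noteq> 0"
  proof (rule ccontr)
    assume "\<not> ?thesis" then have z: "\<forall>e\<in>Ep. \<theta> e = 0" by blast
    then have "Ar \<theta> = 0" unfolding Ar_def by simp
    moreover have "Br \<theta> = 0" using Br_zero z by blast
    ultimately show False using th by simp
  qed
  obtain \<theta>' where th': "\<theta>' \<in> K" "F \<theta>' = F \<theta>" using nm[OF thnz] by blast
  have Kne: "K \<noteq> {}" using th' by blast
  have Ar_eq: "Ar = (\<lambda>\<phi>. \<Sum>e\<in>Ep. (\<phi> e)^2 * inverse (xe e))" by (simp add: fun_eq_iff Ar_def divide_inverse)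
  have Br_eq: "Br = (\<lambda>\<phi>. \<Sum>w\<in>V. (\<Sum>e\<in>Ep. dv e w * \<phi> e)^2 * inverse (X w))" by (simp add: fun_eq_iff Br_def Sr_def divide_inverse)
  have cont: "continuous_on K F" unfolding F_def
  proof (rule continuous_on_divide)
    show "continuous_on K Br" unfolding Br_eq by (intro continuous_intros coord)
    show "continuous_on K Ar" unfolding Ar_eq by (intro continuous_intros coord)
    show "\<forall>x\<in>K. Ar x \<noteq> 0" using Kpos by fastforce
  qed
  obtain \<phi> where ph: "\<phi> \<in> K" "\<forall>\<psi>\<in>K. F \<phi> \<le> F \<psi>" using continuous_attains_inf[OF cK Kne cont] by blast
  have Aph: "0 < Ar \<phi>" using Kpos ph(1) by blast
  have "\<phi> \<in> PiE UNIV S" using ph(1) unfolding K_def by simp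
  then have "\<forall>e. \<phi> e \<in> S e" using PiS by blast
  then have z: "\<forall>e. e \<notin> Ep \<longrightarrow> \<phi> e = 0" unfolding S_def by (metis singletonD)
  have nz: "\<exists>e\<in>Ep. \<phi> e \<noteq> 0"
  proof (rule ccontr)
    assume "\<not> ?thesis" then have z: "\<forall>e\<in>Ep. \<phi> e = 0" by blast
    then have "Ar \<phi> = 0" unfolding Ar_def by simp
    then show False using Aph by simp
  qed
  have "F \<phi> \<le> F \<theta>" using ph(2) th' by auto
  also have "F \<theta> < 1" unfolding F_def using th Br_nn[of \<theta>] by simp
  finally have lt: "Br \<phi> < Ar \<phi>" unfolding F_def using Aph by simp
  have all: "Br \<phi> / Ar \<phi> * Ar \<psi> \<le> Br \<psi>" for \<psi>
  proof (cases "\<exists>e\<in>Ep. \<psi> e \<noteq> 0")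
    case True
    obtain \<psi>' where "\<psi>' \<in> K" "F \<psi>' = F \<psi>" using nm[OF True] by blast
    then have "F \<phi> \<le> F \<psi>" using ph(2) by auto
    moreover have "0 < Ar \<psi>" using True Ar_pos by blast
    ultimately show ?thesis unfolding F_def by (simp add: field_simps)
  next
    case False
    then have "Ar \<psi> = 0" "Br \<psi> = 0" using Br_zero unfolding Ar_def by auto
    then show ?thesis by simp
  qed
  show ?thesis using z nz lt all by blast
qed

end



context eqs begin

lemma unstable: assumes bd: "bad" shows "\<exists>mu. is_eigenvalue EE (Jac V adj a p x) mu \<and> Re mu > 0"
proof -
  obtain \<phi> where z: "\<forall>e. e \<notin> Ep \<longrightarrow> \<phi> e = 0" and nz: "\<exists>e\<in>Ep. \<phi> e \<noteq> 0"
    and lt: "Br \<phi> < Ar \<phi>" and ge: "\<forall>\<psi>. Br \<phi> / Ar \<phi> * Ar \<psi> \<le> Br \<psi>"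
    using minimizer[OF theta0[OF bd]] by blast
  define l where "l = Br \<phi> / Ar \<phi>"
  have Aph: "0 < Ar \<phi>" using nz Ar_pos by blast
  have l1: "l < 1" unfolding l_def using lt Aph by simp
  have Bl: "Br \<phi> = l * Ar \<phi>" unfolding l_def using Aph by simp
  define G where "G e = (\<Sum>w\<in>V. dv e w * Sr \<phi> w / X w)" for e
  define r where "r e = (if e \<in> Ep then G e - l * \<phi> e / xe e else 0)" for e
  have quad: "\<forall>t. 0 \<le> 2*t*(Bb \<phi> r - l*Ab \<phi> r) + t^2*(Br r - l*Ar r)"
  proof
    fix t
    have h: "l * Ar (\<lambda>e. \<phi> e + t*r e) \<le> Br (\<lambda>e. \<phi> e + t*r e)" using ge unfolding l_def by blast
    have "2*t*(Bb \<phi> r - l*Ab \<phi> r) + t^2*(Br r - l*Ar r)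
        = (Br \<phi> + 2*t*Bb \<phi> r + t^2*Br r) - l*(Ar \<phi> + 2*t*Ab \<phi> r + t^2*Ar r)"
      using Bl by (simp add: algebra_simps)
    then show "0 \<le> 2*t*(Bb \<phi> r - l*Ab \<phi> r) + t^2*(Br r - l*Ar r)"
      using h unfolding Ar_exp Br_exp by linarith
  qed
  have st: "Bb \<phi> r - l * Ab \<phi> r = 0" by (rule quad_zero[OF quad])
  have Bb_eq: "Bb \<phi> r = (\<Sum>e\<in>Ep. r e * G e)"
  proof -
    have "Bb \<phi> r = (\<Sum>w\<in>V. \<Sum>e\<in>Ep. Sr \<phi> w * (dv e w * r e) / X w)"
      unfolding Bb_def Sr_def[of r] by (simp add: sum_distrib_left sum_divide_distrib)
    also have "\<dots> = (\<Sum>e\<in>Ep. \<Sum>w\<in>V. Sr \<phi> w * (dv e w * r e) / X w)" by (rule sum.swap)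
    also have "\<dots> = (\<Sum>e\<in>Ep. r e * G e)"
      unfolding G_def sum_distrib_left by (rule sum.cong[OF refl], rule sum.cong[OF refl]) (simp add: mult_ac)
    finally show ?thesis .
  qed
  have "Bb \<phi> r - l * Ab \<phi> r = (\<Sum>e\<in>Ep. r e * G e - l * (\<phi> e * r e / xe e))"
    unfolding Bb_eq Ab_def by (simp add: sum_subtractf sum_distrib_left)
  also have "\<dots> = (\<Sum>e\<in>Ep. (r e)^2)"
  proof (rule sum.cong[OF refl])
    fix e assume "e \<in> Ep"
    then have req: "r e = G e - l * \<phi> e / xe e" by (simp add: r_def)
    have "(r e)^2 = r e * (G e - l * \<phi> e / xe e)" using req by (simp add: power2_eq_square)
    also have "\<dots> = r e * G e - l * (\<phi> e * r e / xe e)" by (simp add: algebra_simps)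
    finally show "r e * G e - l * (\<phi> e * r e / xe e) = (r e)^2" by simp
  qed
  finally have "(\<Sum>e\<in>Ep. (r e)^2) = 0" using st by simp
  then have r0: "\<forall>e\<in>Ep. (r e)^2 = 0" using sum_nonneg_eq_0_iff[OF finEp, of "\<lambda>e. (r e)^2"] by simp
  have Gl: "G e = l * \<phi> e / xe e" if "e \<in> Ep" for e using r0 that unfolding r_def by auto
  define mu where "mu = complex_of_real (HH * (1 - l))"
  define v where "v e = complex_of_real (\<phi> e)" for e
  have h0: "\<forall>f\<in>EE - Ep. v f = 0" using z unfolding v_def by simp
  have ev: "\<forall>e\<in>EE. (\<Sum>f\<in>EE. complex_of_real (Jac V adj a p x e f) * v f) = mu * v e"
  proof
    fix e assume eE: "e \<in> EE"
    show "(\<Sum>f\<in>EE. complex_of_real (Jac V adj a p x e f) * v f) = mu * v e"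
    proof (cases "e \<in> Ep")
      case True
      have Sc: "Sc v w = complex_of_real (Sr \<phi> w)" for w
        unfolding Sc_def Sr_def v_def by simp
      have sG: "(\<Sum>w\<in>V. complex_of_real (dv e w / X w) * Sc v w) = complex_of_real (G e)"
        unfolding Sc G_def of_real_sum by (rule sum.cong) (simp_all add: mult_ac)
      have xnz: "xe e \<noteq> 0" using True unfolding Ep_def by simp
      have "HH * (\<phi> e - xe e * (l * \<phi> e / xe e)) = HH * (1 - l) * \<phi> e" using xnz by (simp add: field_simps)
      then have "complex_of_real HH * (v e - complex_of_real (xe e) * complex_of_real (G e)) = mu * v e"
        unfolding mu_def v_def Gl[OF True] by (metis of_real_diff of_real_mult)
      then show ?thesis using row_pos[OF h0 True] sG by simp
    next
      case False
      have xz: "xe e = 0" using False eE xe_nn[OF eE] unfolding Ep_def by auto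
      have ve: "v e = 0" using z False unfolding v_def by simp
      have "(\<Sum>f\<in>EE. complex_of_real (Jac V adj a p x e f) * v f) = (\<Sum>f\<in>EE. if f = e then - complex_of_real HH * v f else 0)"
        by (rule sum.cong) (simp_all add: Jac_zero[OF eE _ xz])
      also have "\<dots> = - complex_of_real HH * v e" using eE finE by simp
      finally show ?thesis using ve by simp
    qed
  qed
  have "\<exists>e\<in>EE. v e \<noteq> 0" using nz Ep_sub unfolding v_def by auto
  then have "is_eigenvalue EE (Jac V adj a p x) mu" using ev unfolding is_eigenvalue_def by blast
  moreover have "Re mu > 0" unfolding mu_def using H_pos l1 by simp
  ultimately show ?thesis by blast
qed

end

theorem proposition6:
  fixes V :: "'v set" and adj :: "'v \<Rightarrow> 'v \<Rightarrow> bool" and a p :: "'v \<Rightarrow> 'v \<Rightarrow> real"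
    and h1 :: real and nrm :: "('v set \<Rightarrow> real) \<Rightarrow> real"
  assumes "finite V"
    and "\<forall>i j. adj i j \<longrightarrow> i \<in> V \<and> j \<in> V"
    and "\<forall>i j. adj i j = adj j i"
    and "\<forall>i. \<not> adj i i"
    and "\<forall>i j. a i j = a j i \<and> a i j \<ge> 0 \<and> (a i j > 0 \<longrightarrow> adj i j)"
    and "\<forall>i j. p i j = p j i \<and> 0 \<le> p i j \<and> p i j \<le> 1 \<and> (\<not> adj i j \<longrightarrow> p i j = 0)"
    and "\<exists>i j. a i j * p i j > 0"
    and "0 < h1" and "h1 \<le> 1"
    and "is_norm_on (edges adj) nrm"
  shows "Gamma_s V adj a p h1 = {x \<in> Gamma0 V adj a p h1. P_graph V adj a p (\<lambda>i j. x i j > 0)}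
    \<and> (\<forall>x \<in> Gamma_u V adj a p h1. \<exists>(\<theta> :: 'v set \<Rightarrow> real) (mu :: complex).
           Re mu > 0
         \<and> (\<forall>e. e \<notin> edges adj \<longrightarrow> \<theta> e = 0)
         \<and> (\<forall>e\<in>edges adj. (\<Sum>f\<in>edges adj. complex_of_real (Jac V adj a p x e f * \<theta> f))
                = mu * complex_of_real (\<theta> e))
         \<and> nrm \<theta> = 1
         \<and> (\<exists>e\<in>edges adj. case_prod x (epair adj e) > 0 \<and> \<theta> e \<noteq> 0))"
proof -
  have L: "eqs V adj a p h1 x" if "x \<in> Gamma0 V adj a p h1" for x
    by (unfold_locales) (use assms that in auto)
  have A: "Gamma_s V adj a p h1 = {x \<in> Gamma0 V adj a p h1. P_graph V adj a p (\<lambda>i j. x i j > 0)}"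
  proof (intro set_eqI iffI)
    fix x assume xs: "x \<in> Gamma_s V adj a p h1"
    then have x0: "x \<in> Gamma0 V adj a p h1" unfolding Gamma_s_def by simp
    interpret eqs V adj a p h1 x using L[OF x0] .
    have "\<not> bad"
    proof
      assume bad
      then obtain mu where "is_eigenvalue EE (Jac V adj a p x) mu" "Re mu > 0" using unstable by blast
      then show False using xs unfolding Gamma_s_def by force
    qed
    then show "x \<in> {x \<in> Gamma0 V adj a p h1. P_graph V adj a p (\<lambda>i j. x i j > 0)}"
      using P_iff x0 by simp
  next
    fix x assume "x \<in> {x \<in> Gamma0 V adj a p h1. P_graph V adj a p (\<lambda>i j. x i j > 0)}"
    then have x0: "x \<in> Gamma0 V adj a p h1" and P: "P_graph V adj a p (\<lambda>i j. x i j > 0)" by auto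
    interpret eqs V adj a p h1 x using L[OF x0] .
    have "\<not> bad" using P P_iff by simp
    then show "x \<in> Gamma_s V adj a p h1" unfolding Gamma_s_def using x0 stable by blast
  qed
  have B: "\<forall>x \<in> Gamma_u V adj a p h1. \<exists>(\<theta> :: 'v set \<Rightarrow> real) (mu :: complex).
           Re mu > 0
         \<and> (\<forall>e. e \<notin> edges adj \<longrightarrow> \<theta> e = 0)
         \<and> (\<forall>e\<in>edges adj. (\<Sum>f\<in>edges adj. complex_of_real (Jac V adj a p x e f * \<theta> f))
                = mu * complex_of_real (\<theta> e))
         \<and> nrm \<theta> = 1
         \<and> (\<exists>e\<in>edges adj. case_prod x (epair adj e) > 0 \<and> \<theta> e \<noteq> 0)"
  proof
    fix x assume xu: "x \<in> Gamma_u V adj a p h1"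
    then have x0: "x \<in> Gamma0 V adj a p h1" unfolding Gamma_u_def by simp
    interpret eqs V adj a p h1 x using L[OF x0] .
    obtain mu where "is_eigenvalue EE (Jac V adj a p x) mu" "Re mu > 0" using xu unfolding Gamma_u_def by blast
    then show "\<exists>(\<theta> :: 'v set \<Rightarrow> real) (mu :: complex).
           Re mu > 0
         \<and> (\<forall>e. e \<notin> edges adj \<longrightarrow> \<theta> e = 0)
         \<and> (\<forall>e\<in>edges adj. (\<Sum>f\<in>edges adj. complex_of_real (Jac V adj a p x e f * \<theta> f))
                = mu * complex_of_real (\<theta> e))
         \<and> nrm \<theta> = 1
         \<and> (\<exists>e\<in>edges adj. case_prod x (epair adj e) > 0 \<and> \<theta> e \<noteq> 0)"
      using partb assms(10) by blast
  qed
  show ?thesis using A B by blast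
qed



end
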